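(* Let $G,H,K$ be pro-oligomorphic groups with $G$ split, and let $\Phi:\mathbf{S}(G)\to\mathbf{S}(K)$ and $\Psi:\mathbf{S}(H)\to\mathbf{S}(K)$ be exact functors. Suppose that $\Phi(X)\times\Psi(Y)$ is a transitive $K$-set whenever $X\in\mathbf{S}(G)$ and $Y\in\mathbf{S}(H)$ are transitive. Let $X$ be a transitive $G$-set, $Y$ a transitive $H$-set, and $Z$ a quotient of the $K$-set $\Phi(X)\times\Psi(Y)$. Then there exist a quotient $X'$ of $X$ and a quotient $Y'$ of $Y$ such that $Z\cong\Phi(X')\times\Psi(Y')$.
   Context: A pro-oligomorphic group is a Hausdorff topological group in which open subgroups form a neighborhood basis of the identity and $U\backslash G/V$ is finite for all open subgroups $U,V$. $\mathbf{S}(G)$ is the category of $G$-sets, i.e. sets with an action having open stabilizers and finitely many orbits, with $G$-equivariant maps; it has finite limits and colimits, computed on underlying sets. A functor between such categories is exact if it commutes with finite limits and finite colimits. $G$ is split if for every pro-oligomorphic $H$, every transitive $(G\times H)$-set is isomorphic to $X\times Y$ with $X$ a transitive $G$-set and $Y$ a transitive $H$-set. A quotient of a $K$-set $W$ is a $K$-set $Z$ together with a surjective $K$-map $W\to Z$. *)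

theory Defs
  imports "HOL-Analysis.Analysis" "HOL-Algebra.Group"
begin

definition topgroup :: "'g monoid \<Rightarrow> 'g topology \<Rightarrow> bool" where
  "topgroup G T \<longleftrightarrow> group G \<and> topspace T = carrier G \<and>
     continuous_map (prod_topology T T) T (\<lambda>(x, y). x \<otimes>\<^bsub>G\<^esub> y) \<and>
     continuous_map T T (\<lambda>x. inv\<^bsub>G\<^esub> x)"

definition open_subgroup :: "'g monoid \<Rightarrow> 'g topology \<Rightarrow> 'g set \<Rightarrow> bool" where
  "open_subgroup G T U \<longleftrightarrow> subgroup U G \<and> openin T U"

definition double_coset :: "'g monoid \<Rightarrow> 'g set \<Rightarrow> 'g \<Rightarrow> 'g set \<Rightarrow> 'g set" where
  "double_coset G U g V = {u \<otimes>\<^bsub>G\<^esub> g \<otimes>\<^bsub>G\<^esub> v | u v. u \<in> U \<and> v \<in> V}"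

definition pro_oligomorphic :: "'g monoid \<Rightarrow> 'g topology \<Rightarrow> bool" where
  "pro_oligomorphic G T \<longleftrightarrow> topgroup G T \<and> Hausdorff_space T \<and>
     (\<forall>W. openin T W \<and> \<one>\<^bsub>G\<^esub> \<in> W \<longrightarrow> (\<exists>U. open_subgroup G T U \<and> U \<subseteq> W)) \<and>
     (\<forall>U V. open_subgroup G T U \<and> open_subgroup G T V \<longrightarrow>
        finite {double_coset G U g V | g. g \<in> carrier G})"

type_synonym ('a, 'g) gset = "'a set \<times> ('g \<Rightarrow> 'a \<Rightarrow> 'a)"

definition orbit :: "'g monoid \<Rightarrow> ('a, 'g) gset \<Rightarrow> 'a \<Rightarrow> 'a set" where
  "orbit G X x = (\<lambda>g. snd X g x) ` carrier G"

definition is_gset :: "'g monoid \<Rightarrow> 'g topology \<Rightarrow> ('a, 'g) gset \<Rightarrow> bool" where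
  "is_gset G T X \<longleftrightarrow>
     (\<forall>g\<in>carrier G. \<forall>x\<in>fst X. snd X g x \<in> fst X) \<and>
     (\<forall>x\<in>fst X. snd X \<one>\<^bsub>G\<^esub> x = x) \<and>
     (\<forall>g\<in>carrier G. \<forall>h\<in>carrier G. \<forall>x\<in>fst X.
         snd X (g \<otimes>\<^bsub>G\<^esub> h) x = snd X g (snd X h x)) \<and>
     (\<forall>x\<in>fst X. openin T {g \<in> carrier G. snd X g x = x}) \<and>
     finite (orbit G X ` fst X)"

definition transitive_gset :: "'g monoid \<Rightarrow> ('a, 'g) gset \<Rightarrow> bool" where
  "transitive_gset G X \<longleftrightarrow> fst X \<noteq> {} \<and>
     (\<forall>x\<in>fst X. \<forall>y\<in>fst X. \<exists>g\<in>carrier G. snd X g x = y)"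

definition gmap :: "'g monoid \<Rightarrow> ('a, 'g) gset \<Rightarrow> ('b, 'g) gset \<Rightarrow> ('a \<Rightarrow> 'b) \<Rightarrow> bool" where
  "gmap G X Y f \<longleftrightarrow> (\<forall>x\<in>fst X. f x \<in> fst Y) \<and>
     (\<forall>g\<in>carrier G. \<forall>x\<in>fst X. f (snd X g x) = snd Y g (f x))"

definition gset_iso :: "'g monoid \<Rightarrow> ('a, 'g) gset \<Rightarrow> ('b, 'g) gset \<Rightarrow> bool" where
  "gset_iso G X Y \<longleftrightarrow> (\<exists>f. gmap G X Y f \<and> bij_betw f (fst X) (fst Y))"

definition gset_quotient :: "'g monoid \<Rightarrow> 'g topology \<Rightarrow> ('a, 'g) gset \<Rightarrow> ('b, 'g) gset \<Rightarrow> bool" where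
  "gset_quotient G T W Z \<longleftrightarrow> is_gset G T Z \<and> (\<exists>f. gmap G W Z f \<and> f ` fst W = fst Z)"

definition diag_prod :: "('a, 'g) gset \<Rightarrow> ('b, 'g) gset \<Rightarrow> ('a \<times> 'b, 'g) gset" where
  "diag_prod X Y = (fst X \<times> fst Y, \<lambda>g (x, y). (snd X g x, snd Y g y))"

definition ext_prod :: "('a, 'g) gset \<Rightarrow> ('b, 'h) gset \<Rightarrow> ('a \<times> 'b, 'g \<times> 'h) gset" where
  "ext_prod X Y = (fst X \<times> fst Y, \<lambda>(g, h) (x, y). (snd X g x, snd Y h y))"

section \<open>Finite limits and colimits in S(G) (computed on underlying sets)\<close>

definition is_terminal :: "('a, 'g) gset \<Rightarrow> bool" where
  "is_terminal X \<longleftrightarrow> card (fst X) = 1"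

definition is_initial :: "('a, 'g) gset \<Rightarrow> bool" where
  "is_initial X \<longleftrightarrow> fst X = {}"

definition is_product :: "'g monoid \<Rightarrow> ('a, 'g) gset \<Rightarrow> ('a, 'g) gset \<Rightarrow> ('a, 'g) gset
    \<Rightarrow> ('a \<Rightarrow> 'a) \<Rightarrow> ('a \<Rightarrow> 'a) \<Rightarrow> bool" where
  "is_product G A B P p1 p2 \<longleftrightarrow> gmap G P A p1 \<and> gmap G P B p2 \<and>
     bij_betw (\<lambda>z. (p1 z, p2 z)) (fst P) (fst A \<times> fst B)"

definition is_equalizer :: "'g monoid \<Rightarrow> ('a, 'g) gset \<Rightarrow> ('a, 'g) gset \<Rightarrow> ('a \<Rightarrow> 'a) \<Rightarrow> ('a \<Rightarrow> 'a)
    \<Rightarrow> ('a, 'g) gset \<Rightarrow> ('a \<Rightarrow> 'a) \<Rightarrow> bool" where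
  "is_equalizer G A B f g E e \<longleftrightarrow> gmap G E A e \<and> inj_on e (fst E) \<and>
     e ` fst E = {x \<in> fst A. f x = g x}"

definition is_coproduct :: "'g monoid \<Rightarrow> ('a, 'g) gset \<Rightarrow> ('a, 'g) gset \<Rightarrow> ('a, 'g) gset
    \<Rightarrow> ('a \<Rightarrow> 'a) \<Rightarrow> ('a \<Rightarrow> 'a) \<Rightarrow> bool" where
  "is_coproduct G A B C i1 i2 \<longleftrightarrow> gmap G A C i1 \<and> gmap G B C i2 \<and>
     inj_on i1 (fst A) \<and> inj_on i2 (fst B) \<and> i1 ` fst A \<inter> i2 ` fst B = {} \<and>
     i1 ` fst A \<union> i2 ` fst B = fst C"

definition is_coequalizer :: "'g monoid \<Rightarrow> ('a, 'g) gset \<Rightarrow> ('a, 'g) gset \<Rightarrow> ('a \<Rightarrow> 'a) \<Rightarrow> ('a \<Rightarrow> 'a)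
    \<Rightarrow> ('a, 'g) gset \<Rightarrow> ('a \<Rightarrow> 'a) \<Rightarrow> bool" where
  "is_coequalizer G A B f g Q q \<longleftrightarrow> gmap G B Q q \<and> q ` fst B = fst Q \<and>
     (\<forall>x\<in>fst B. \<forall>y\<in>fst B. q x = q y \<longleftrightarrow>
        (x, y) \<in> ({(f a, g a) | a. a \<in> fst A} \<union> {(g a, f a) | a. a \<in> fst A})\<^sup>*)"

text \<open>Objects of S(G) are G-sets whose underlying set lies in a fixed carrier type 'a
  (in the theorem: nat \<times> 'g set, which contains an isomorphic copy of every G-set).
  A functor is given by its object map Fo and its morphism map Fm X Y f; morphisms are
  identified when they agree on the underlying set of the source.\<close>

definition is_functor :: "'g monoid \<Rightarrow> 'g topology \<Rightarrow> 'k monoid \<Rightarrow> 'k topology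
    \<Rightarrow> (('a, 'g) gset \<Rightarrow> ('b, 'k) gset)
    \<Rightarrow> (('a, 'g) gset \<Rightarrow> ('a, 'g) gset \<Rightarrow> ('a \<Rightarrow> 'a) \<Rightarrow> ('b \<Rightarrow> 'b)) \<Rightarrow> bool" where
  "is_functor G TG K TK Fo Fm \<longleftrightarrow>
     (\<forall>X. is_gset G TG X \<longrightarrow> is_gset K TK (Fo X)) \<and>
     (\<forall>X Y f. is_gset G TG X \<and> is_gset G TG Y \<and> gmap G X Y f \<longrightarrow>
        gmap K (Fo X) (Fo Y) (Fm X Y f)) \<and>
     (\<forall>X Y f f'. is_gset G TG X \<and> is_gset G TG Y \<and> gmap G X Y f \<and> gmap G X Y f' \<and>
        (\<forall>x\<in>fst X. f x = f' x) \<longrightarrow> (\<forall>z\<in>fst (Fo X). Fm X Y f z = Fm X Y f' z)) \<and>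
     (\<forall>X. is_gset G TG X \<longrightarrow> (\<forall>z\<in>fst (Fo X). Fm X X id z = z)) \<and>
     (\<forall>X Y Z f g. is_gset G TG X \<and> is_gset G TG Y \<and> is_gset G TG Z \<and>
        gmap G X Y f \<and> gmap G Y Z g \<longrightarrow>
        (\<forall>z\<in>fst (Fo X). Fm X Z (g \<circ> f) z = Fm Y Z g (Fm X Y f z)))"

definition exact_functor :: "'g monoid \<Rightarrow> 'g topology \<Rightarrow> 'k monoid \<Rightarrow> 'k topology
    \<Rightarrow> (('a, 'g) gset \<Rightarrow> ('b, 'k) gset)
    \<Rightarrow> (('a, 'g) gset \<Rightarrow> ('a, 'g) gset \<Rightarrow> ('a \<Rightarrow> 'a) \<Rightarrow> ('b \<Rightarrow> 'b)) \<Rightarrow> bool" where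
  "exact_functor G TG K TK Fo Fm \<longleftrightarrow> is_functor G TG K TK Fo Fm \<and>
     \<comment> \<open>finite limits: terminal object, binary products, equalizers\<close>
     (\<forall>X. is_gset G TG X \<and> is_terminal X \<longrightarrow> is_terminal (Fo X)) \<and>
     (\<forall>A B P p1 p2. is_gset G TG A \<and> is_gset G TG B \<and> is_gset G TG P \<and>
        is_product G A B P p1 p2 \<longrightarrow>
        is_product K (Fo A) (Fo B) (Fo P) (Fm P A p1) (Fm P B p2)) \<and>
     (\<forall>A B f g E e. is_gset G TG A \<and> is_gset G TG B \<and> is_gset G TG E \<and>
        gmap G A B f \<and> gmap G A B g \<and> is_equalizer G A B f g E e \<longrightarrow>
        is_equalizer K (Fo A) (Fo B) (Fm A B f) (Fm A B g) (Fo E) (Fm E A e)) \<and>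
     \<comment> \<open>finite colimits: initial object, binary coproducts, coequalizers\<close>
     (\<forall>X. is_gset G TG X \<and> is_initial X \<longrightarrow> is_initial (Fo X)) \<and>
     (\<forall>A B C i1 i2. is_gset G TG A \<and> is_gset G TG B \<and> is_gset G TG C \<and>
        is_coproduct G A B C i1 i2 \<longrightarrow>
        is_coproduct K (Fo A) (Fo B) (Fo C) (Fm A C i1) (Fm B C i2)) \<and>
     (\<forall>A B f g Q q. is_gset G TG A \<and> is_gset G TG B \<and> is_gset G TG Q \<and>
        gmap G A B f \<and> gmap G A B g \<and> is_coequalizer G A B f g Q q \<longrightarrow>
        is_coequalizer K (Fo A) (Fo B) (Fm A B f) (Fm A B g) (Fo Q) (Fm B Q q))"

text \<open>G is split relative to the pro-oligomorphic groups whose carrier type is 'h.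
  G-sets, H-sets and (G\<times>H)-sets are taken with carriers in the universal carrier types
  nat \<times> 'g set etc., which contain a copy of every such set up to isomorphism.\<close>

definition split_wrt :: "'g monoid \<Rightarrow> 'g topology \<Rightarrow> 'h itself \<Rightarrow> bool" where
  "split_wrt G TG (_ :: 'h itself) \<longleftrightarrow>
     (\<forall>(H :: 'h monoid) TH. pro_oligomorphic H TH \<longrightarrow>
       (\<forall>W :: (nat \<times> ('g \<times> 'h) set, 'g \<times> 'h) gset.
          is_gset (G \<times>\<times> H) (prod_topology TG TH) W \<and> transitive_gset (G \<times>\<times> H) W \<longrightarrow>
          (\<exists>(X :: (nat \<times> 'g set, 'g) gset) (Y :: (nat \<times> 'h set, 'h) gset).
             is_gset G TG X \<and> transitive_gset G X \<and>
             is_gset H TH Y \<and> transitive_gset H Y \<and>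
             gset_iso (G \<times>\<times> H) W (ext_prod X Y))))"

end

theory Submission
  imports Defs
begin

definition pre_gset :: "'g monoid \<Rightarrow> 'g topology \<Rightarrow> ('a, 'g) gset \<Rightarrow> bool" where
  "pre_gset G T X \<longleftrightarrow>
     (\<forall>g\<in>carrier G. \<forall>x\<in>fst X. snd X g x \<in> fst X) \<and>
     (\<forall>x\<in>fst X. snd X \<one>\<^bsub>G\<^esub> x = x) \<and>
     (\<forall>g\<in>carrier G. \<forall>h\<in>carrier G. \<forall>x\<in>fst X.
         snd X (g \<otimes>\<^bsub>G\<^esub> h) x = snd X g (snd X h x)) \<and>
     (\<forall>x\<in>fst X. openin T {g \<in> carrier G. snd X g x = x})"

lemma is_gset_iff: "is_gset G T X \<longleftrightarrow> pre_gset G T X \<and> finite (orbit G X ` fst X)"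
  unfolding is_gset_def pre_gset_def by blast

lemma is_gsetI: "pre_gset G T X \<Longrightarrow> finite (orbit G X ` fst X) \<Longrightarrow> is_gset G T X"
  unfolding is_gset_def pre_gset_def by blast
lemma is_gset_pre: "is_gset G T X \<Longrightarrow> pre_gset G T X"
  unfolding is_gset_def pre_gset_def by blast
lemma is_gset_fin: "is_gset G T X \<Longrightarrow> finite (orbit G X ` fst X)"
  unfolding is_gset_def by blast

lemma pre_closed: "pre_gset G T X \<Longrightarrow> g \<in> carrier G \<Longrightarrow> x \<in> fst X \<Longrightarrow> snd X g x \<in> fst X"
  unfolding pre_gset_def by blast
lemma pre_one: "pre_gset G T X \<Longrightarrow> x \<in> fst X \<Longrightarrow> snd X \<one>\<^bsub>G\<^esub> x = x"
  unfolding pre_gset_def by blast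
lemma pre_mult: "pre_gset G T X \<Longrightarrow> g \<in> carrier G \<Longrightarrow> h \<in> carrier G \<Longrightarrow> x \<in> fst X \<Longrightarrow>
   snd X (g \<otimes>\<^bsub>G\<^esub> h) x = snd X g (snd X h x)"
  unfolding pre_gset_def by blast
lemma pre_open: "pre_gset G T X \<Longrightarrow> x \<in> fst X \<Longrightarrow> openin T {g \<in> carrier G. snd X g x = x}"
  unfolding pre_gset_def by blast

lemma pre_inv:
  assumes "group G" "pre_gset G T X" "g \<in> carrier G" "x \<in> fst X"
  shows "snd X (inv\<^bsub>G\<^esub> g) (snd X g x) = x"
proof -
  have "snd X (inv\<^bsub>G\<^esub> g) (snd X g x) = snd X (inv\<^bsub>G\<^esub> g \<otimes>\<^bsub>G\<^esub> g) x"
    using assms by (simp add: pre_mult group.inv_closed)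
  also have "\<dots> = x" using assms by (simp add: group.l_inv pre_one)
  finally show ?thesis .
qed

lemma pre_inv2:
  assumes "group G" "pre_gset G T X" "g \<in> carrier G" "x \<in> fst X"
  shows "snd X g (snd X (inv\<^bsub>G\<^esub> g) x) = x"
  using pre_inv[OF assms(1,2) group.inv_closed[OF assms(1,3)] assms(4)] assms
  by (simp add: group.inv_inv)

lemma orbit_mem: "pre_gset G T X \<Longrightarrow> x \<in> fst X \<Longrightarrow> g \<in> carrier G \<Longrightarrow> snd X g x \<in> orbit G X x"
  unfolding orbit_def by blast

lemma orbit_self: "group G \<Longrightarrow> pre_gset G T X \<Longrightarrow> x \<in> fst X \<Longrightarrow> x \<in> orbit G X x"
proof -
  assume a: "group G" "pre_gset G T X" "x \<in> fst X"
  have "snd X \<one>\<^bsub>G\<^esub> x = x" using pre_one a by metis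
  moreover have "\<one>\<^bsub>G\<^esub> \<in> carrier G" using a(1) by (simp add: group.is_monoid monoid.one_closed)
  ultimately show ?thesis unfolding orbit_def by (metis image_eqI)
qed

lemma orbit_act:
  assumes "group G" "pre_gset G T X" "g \<in> carrier G" "x \<in> fst X"
  shows "orbit G X (snd X g x) = orbit G X x"
proof
  show "orbit G X (snd X g x) \<subseteq> orbit G X x"
  proof
    fix y assume "y \<in> orbit G X (snd X g x)"
    then obtain h where h: "h \<in> carrier G" "y = snd X h (snd X g x)" unfolding orbit_def by blast
    have e: "snd X (h \<otimes>\<^bsub>G\<^esub> g) x = snd X h (snd X g x)" by (rule pre_mult[OF assms(2) h(1) assms(3,4)])
    have c: "h \<otimes>\<^bsub>G\<^esub> g \<in> carrier G" using assms(1,3) h(1) by (simp add: group.is_monoid monoid.m_closed)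
    show "y \<in> orbit G X x" unfolding orbit_def using e c h(2) by (metis image_eqI)
  qed
next
  show "orbit G X x \<subseteq> orbit G X (snd X g x)"
  proof
    fix y assume "y \<in> orbit G X x"
    then obtain h where h: "h \<in> carrier G" "y = snd X h x" unfolding orbit_def by blast
    have ic: "inv\<^bsub>G\<^esub> g \<in> carrier G" using assms(1,3) by (simp add: group.inv_closed)
    have gx: "snd X g x \<in> fst X" by (rule pre_closed[OF assms(2,3,4)])
    have "snd X (h \<otimes>\<^bsub>G\<^esub> inv\<^bsub>G\<^esub> g) (snd X g x) = snd X h (snd X (inv\<^bsub>G\<^esub> g) (snd X g x))"
      by (rule pre_mult[OF assms(2) h(1) ic gx])
    also have "\<dots> = y" using pre_inv[OF assms] h(2) by simp
    finally have e: "snd X (h \<otimes>\<^bsub>G\<^esub> inv\<^bsub>G\<^esub> g) (snd X g x) = y" .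
    have c: "h \<otimes>\<^bsub>G\<^esub> inv\<^bsub>G\<^esub> g \<in> carrier G" using assms(1) ic h(1) by (simp add: group.is_monoid monoid.m_closed)
    show "y \<in> orbit G X (snd X g x)" unfolding orbit_def using e c by (metis image_eqI)
  qed
qed

lemma orbit_eq_mem:
  assumes "group G" "pre_gset G T X" "x \<in> fst X" "y \<in> orbit G X x"
  shows "orbit G X y = orbit G X x"
proof -
  obtain g where "g \<in> carrier G" "y = snd X g x" using assms(4) unfolding orbit_def by blast
  then show ?thesis using orbit_act[OF assms(1,2) _ assms(3)] by simp
qed

lemma orbit_subset: "pre_gset G T X \<Longrightarrow> x \<in> fst X \<Longrightarrow> orbit G X x \<subseteq> fst X"
  unfolding orbit_def using pre_closed by fastforce

lemma transitive_finite:
  assumes "group G" "pre_gset G T X" "transitive_gset G X"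
  shows "finite (orbit G X ` fst X)"
proof -
  obtain x0 where x0: "x0 \<in> fst X" using assms(3) unfolding transitive_gset_def by blast
  have "orbit G X ` fst X \<subseteq> {orbit G X x0}"
  proof
    fix Ob assume "Ob \<in> orbit G X ` fst X"
    then obtain x where x: "x \<in> fst X" "Ob = orbit G X x" by blast
    then obtain g where "g \<in> carrier G" "snd X g x0 = x" using assms(3) x0 unfolding transitive_gset_def by blast
    then have "orbit G X x = orbit G X x0" using orbit_act[OF assms(1,2) _ x0] by metis
    then show "Ob \<in> {orbit G X x0}" using x by simp
  qed
  then show ?thesis by (rule finite_subset) simp
qed

lemma transitive_is_gset: "group G \<Longrightarrow> pre_gset G T X \<Longrightarrow> transitive_gset G X \<Longrightarrow> is_gset G T X"
  using transitive_finite is_gsetI by blast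

lemma gmap_comp: "gmap G A B f \<Longrightarrow> gmap G B C g \<Longrightarrow> gmap G A C (g \<circ> f)"
  unfolding gmap_def by auto

lemma gmap_cong: "pre_gset G T A \<Longrightarrow> gmap G A B f \<Longrightarrow> (\<And>x. x \<in> fst A \<Longrightarrow> f x = f' x) \<Longrightarrow> gmap G A B f'"
  unfolding gmap_def using pre_closed by fastforce

definition rep :: "'g monoid \<Rightarrow> ('x, 'g) gset \<Rightarrow> 'x \<Rightarrow> 'x" where
  "rep G A a = (SOME b. b \<in> fst A \<and> orbit G A b = orbit G A a)"

definition cenc :: "'g monoid \<Rightarrow> ('x, 'g) gset \<Rightarrow> 'x \<Rightarrow> nat \<times> 'g set" where
  "cenc G A a = (to_nat_on (orbit G A ` fst A) (orbit G A a), {g \<in> carrier G. snd A g (rep G A a) = a})"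

lemma cenc_inj:
  assumes "group G" "is_gset G T A"
  shows "inj_on (cenc G A) (fst A)"
proof (rule inj_onI)
  fix a b assume a: "a \<in> fst A" and b: "b \<in> fst A" and eq: "cenc G A a = cenc G A b"
  have pre: "pre_gset G T A" and fin: "finite (orbit G A ` fst A)" using is_gset_pre[OF assms(2)] is_gset_fin[OF assms(2)] by auto
  have "inj_on (to_nat_on (orbit G A ` fst A)) (orbit G A ` fst A)"
    using fin by (intro inj_on_to_nat_on countable_finite)
  moreover have "to_nat_on (orbit G A ` fst A) (orbit G A a) = to_nat_on (orbit G A ` fst A) (orbit G A b)"
    using eq unfolding cenc_def by simp
  ultimately have oeq: "orbit G A a = orbit G A b" using a b by (meson image_eqI inj_onD)
  then have req: "rep G A a = rep G A b" unfolding rep_def by simp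
  have ex: "\<exists>c. c \<in> fst A \<and> orbit G A c = orbit G A a" using a by blast
  have "rep G A a \<in> fst A \<and> orbit G A (rep G A a) = orbit G A a"
    unfolding rep_def by (rule someI_ex[OF ex])
  then have r: "rep G A a \<in> fst A" "orbit G A (rep G A a) = orbit G A a" by auto
  have aa: "a \<in> orbit G A a" by (rule orbit_self[OF assms(1) pre a])
  have "a \<in> orbit G A (rep G A a)" unfolding r(2) by (rule aa)
  then have "a \<in> (\<lambda>g. snd A g (rep G A a)) ` carrier G" unfolding orbit_def .
  then obtain g where g1: "a = snd A g (rep G A a)" and g0: "g \<in> carrier G" by (rule imageE)
  note g = g0 g1[symmetric]
  have "snd (cenc G A a) = snd (cenc G A b)" using eq by simp
  then have "{g \<in> carrier G. snd A g (rep G A a) = a} = {g \<in> carrier G. snd A g (rep G A b) = b}"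
    unfolding cenc_def by simp
  then have "g \<in> {g \<in> carrier G. snd A g (rep G A b) = b}" using g by blast
  then show "a = b" using g req by simp
qed

definition transp :: "('x \<Rightarrow> 'y) \<Rightarrow> ('x, 'g) gset \<Rightarrow> ('y, 'g) gset" where
  "transp e A = (e ` fst A, \<lambda>g z. e (snd A g (inv_into (fst A) e z)))"

lemma transp_fst[simp]: "fst (transp e A) = e ` fst A" by (simp add: transp_def)
lemma transp_act: "inj_on e (fst A) \<Longrightarrow> a \<in> fst A \<Longrightarrow> snd (transp e A) g (e a) = e (snd A g a)"
  by (simp add: transp_def)

lemma transp_pre:
  assumes inj: "inj_on e (fst A)" and pre: "pre_gset G T A"
  shows "pre_gset G T (transp e A)"
  unfolding pre_gset_def
proof (intro conjI ballI)
  fix g z assume g: "g \<in> carrier G" and z: "z \<in> fst (transp e A)"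
  then obtain a where a: "a \<in> fst A" "z = e a" by auto
  show "snd (transp e A) g z \<in> fst (transp e A)"
    using a g transp_act[OF inj a(1)] pre_closed[OF pre g a(1)] by simp
next
  fix z assume z: "z \<in> fst (transp e A)"
  then obtain a where a: "a \<in> fst A" "z = e a" by auto
  show "snd (transp e A) \<one>\<^bsub>G\<^esub> z = z"
    using a transp_act[OF inj a(1)] pre_one[OF pre a(1)] by simp
next
  fix g h z assume g: "g \<in> carrier G" and h: "h \<in> carrier G" and z: "z \<in> fst (transp e A)"
  then obtain a where a: "a \<in> fst A" "z = e a" by auto
  have ha: "snd A h a \<in> fst A" by (rule pre_closed[OF pre h a(1)])
  have "snd (transp e A) (g \<otimes>\<^bsub>G\<^esub> h) z = e (snd A (g \<otimes>\<^bsub>G\<^esub> h) a)"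
    using a transp_act[OF inj a(1)] by simp
  also have "\<dots> = e (snd A g (snd A h a))" using pre_mult[OF pre g h a(1)] by simp
  also have "\<dots> = snd (transp e A) g (snd (transp e A) h z)"
    using a transp_act[OF inj a(1), of h] transp_act[OF inj ha, of g] by simp
  finally show "snd (transp e A) (g \<otimes>\<^bsub>G\<^esub> h) z = snd (transp e A) g (snd (transp e A) h z)" .
next
  fix z assume z: "z \<in> fst (transp e A)"
  then obtain a where a: "a \<in> fst A" "z = e a" by auto
  have "{g \<in> carrier G. snd (transp e A) g z = z} = {g \<in> carrier G. snd A g a = a}"
  proof (intro Collect_cong conj_cong refl)
    fix g assume g: "g \<in> carrier G"
    have "snd (transp e A) g z = e (snd A g a)" using a transp_act[OF inj a(1)] by simp
    then show "(snd (transp e A) g z = z) = (snd A g a = a)"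
      using a inj pre_closed[OF pre g a(1)] by (auto dest: inj_onD)
  qed
  then show "openin T {g \<in> carrier G. snd (transp e A) g z = z}" using pre_open[OF pre a(1)] by simp
qed

lemma transp_orbit:
  assumes "inj_on e (fst A)" "a \<in> fst A"
  shows "orbit G (transp e A) (e a) = e ` orbit G A a"
  using assms unfolding orbit_def by (auto simp: transp_act)

lemma transp_gset:
  assumes "inj_on e (fst A)" "is_gset G T A"
  shows "is_gset G T (transp e A)"
proof -
  have "orbit G (transp e A) ` fst (transp e A) = (\<lambda>a. orbit G (transp e A) (e a)) ` fst A"
    by (simp add: image_image)
  also have "\<dots> = (\<lambda>a. e ` orbit G A a) ` fst A"
    using transp_orbit[OF assms(1)] by (intro image_cong) auto
  also have "\<dots> = (\<lambda>Ob. e ` Ob) ` (orbit G A ` fst A)" by (simp add: image_image)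
  finally have "finite (orbit G (transp e A) ` fst (transp e A))"
    using is_gset_fin[OF assms(2)] by simp
  then show ?thesis using transp_pre[OF assms(1) is_gset_pre[OF assms(2)]] by (rule is_gsetI[rotated])
qed

lemma transp_gmap: "inj_on e (fst A) \<Longrightarrow> gmap G A (transp e A) e"
  unfolding gmap_def by (auto simp: transp_act)

lemma transp_gmap_inv:
  assumes inj: "inj_on e (fst A)" and pre: "pre_gset G T A"
  shows "gmap G (transp e A) A (inv_into (fst A) e)"
  unfolding gmap_def
proof (intro conjI ballI)
  fix z assume "z \<in> fst (transp e A)"
  then show "inv_into (fst A) e z \<in> fst A" by (auto intro: inv_into_into)
next
  fix g z assume g: "g \<in> carrier G" and z: "z \<in> fst (transp e A)"
  then obtain a where a: "a \<in> fst A" "z = e a" by auto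
  have "snd (transp e A) g z = e (snd A g a)" using a transp_act[OF inj a(1)] by simp
  then show "inv_into (fst A) e (snd (transp e A) g z) = snd A g (inv_into (fst A) e z)"
    using a inj pre_closed[OF pre g a(1)] by simp
qed

lemma transp_trans: "inj_on e (fst A) \<Longrightarrow> transitive_gset G A \<Longrightarrow> transitive_gset G (transp e A)"
proof -
  assume inj: "inj_on e (fst A)" and tr: "transitive_gset G A"
  show ?thesis unfolding transitive_gset_def
  proof (intro conjI ballI)
    show "fst (transp e A) \<noteq> {}" using tr unfolding transitive_gset_def by simp
  next
    fix z w assume "z \<in> fst (transp e A)" "w \<in> fst (transp e A)"
    then obtain a b where ab: "a \<in> fst A" "b \<in> fst A" "z = e a" "w = e b" by auto
    then obtain g where "g \<in> carrier G" "snd A g a = b" using tr unfolding transitive_gset_def by blast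
    then show "\<exists>g\<in>carrier G. snd (transp e A) g z = w" using ab inj by (auto simp: transp_act)
  qed
qed

definition canon :: "'g monoid \<Rightarrow> ('x, 'g) gset \<Rightarrow> (nat \<times> 'g set, 'g) gset" where
  "canon G A = transp (cenc G A) A"

definition dec :: "'g monoid \<Rightarrow> ('x, 'g) gset \<Rightarrow> nat \<times> 'g set \<Rightarrow> 'x" where
  "dec G A = inv_into (fst A) (cenc G A)"

lemma restr_pre:
  assumes pre: "pre_gset G T A" and sub: "B \<subseteq> fst A" and inv: "\<forall>g\<in>carrier G. \<forall>x\<in>B. snd A g x \<in> B"
  shows "pre_gset G T (B, snd A)"
  unfolding pre_gset_def fst_conv snd_conv
proof (intro conjI ballI)
  fix g x assume "g \<in> carrier G" "x \<in> B" then show "snd A g x \<in> B" using inv by blast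
next
  fix x assume "x \<in> B" then show "snd A \<one>\<^bsub>G\<^esub> x = x" using sub pre_one[OF pre] by blast
next
  fix g h x assume "g \<in> carrier G" "h \<in> carrier G" "x \<in> B"
  then show "snd A (g \<otimes>\<^bsub>G\<^esub> h) x = snd A g (snd A h x)" using sub pre_mult[OF pre] by blast
next
  fix x assume "x \<in> B" then show "openin T {g \<in> carrier G. snd A g x = x}" using sub pre_open[OF pre] by blast
qed

lemma orbit_restr: "orbit G (B, snd A) x = orbit G A x"
  unfolding orbit_def by simp

lemma restr_gset:
  assumes "is_gset G T A" "B \<subseteq> fst A" "\<forall>g\<in>carrier G. \<forall>x\<in>B. snd A g x \<in> B"
  shows "is_gset G T (B, snd A)"
proof (rule is_gsetI)
  show "pre_gset G T (B, snd A)" using restr_pre[OF is_gset_pre[OF assms(1)] assms(2,3)] .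
  have "orbit G (B, snd A) ` fst (B, snd A) \<subseteq> orbit G A ` fst A"
    using assms(2) by (auto simp: orbit_restr)
  then show "finite (orbit G (B, snd A) ` fst (B, snd A))"
    using is_gset_fin[OF assms(1)] by (rule finite_subset)
qed

lemma diag_act: "snd (diag_prod X Y) g (x, y) = (snd X g x, snd Y g y)"
  by (simp add: diag_prod_def)
lemma diag_fst: "fst (diag_prod X Y) = fst X \<times> fst Y"
  by (simp add: diag_prod_def)

lemma diag_pre:
  assumes px: "pre_gset G T X" and py: "pre_gset G T Y"
  shows "pre_gset G T (diag_prod X Y)"
  unfolding pre_gset_def diag_fst
proof (intro conjI ballI)
  fix g p assume g: "g \<in> carrier G" and p: "p \<in> fst X \<times> fst Y"
  then show "snd (diag_prod X Y) g p \<in> fst X \<times> fst Y"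
    using pre_closed[OF px g] pre_closed[OF py g] by (auto simp: diag_act)
next
  fix p assume p: "p \<in> fst X \<times> fst Y"
  then show "snd (diag_prod X Y) \<one>\<^bsub>G\<^esub> p = p"
    using pre_one[OF px] pre_one[OF py] by (auto simp: diag_act)
next
  fix g h p assume g: "g \<in> carrier G" and h: "h \<in> carrier G" and p: "p \<in> fst X \<times> fst Y"
  then show "snd (diag_prod X Y) (g \<otimes>\<^bsub>G\<^esub> h) p = snd (diag_prod X Y) g (snd (diag_prod X Y) h p)"
    using pre_mult[OF px g h] pre_mult[OF py g h] by (auto simp: diag_act)
next
  fix p assume p: "p \<in> fst X \<times> fst Y"
  then obtain x y where xy: "p = (x, y)" "x \<in> fst X" "y \<in> fst Y" by auto
  have "{g \<in> carrier G. snd (diag_prod X Y) g p = p} =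
        {g \<in> carrier G. snd X g x = x} \<inter> {g \<in> carrier G. snd Y g y = y}"
    using xy by (auto simp: diag_act)
  then show "openin T {g \<in> carrier G. snd (diag_prod X Y) g p = p}"
    using pre_open[OF px xy(2)] pre_open[OF py xy(3)] by (simp add: openin_Int)
qed

lemma ext_act: "snd (ext_prod X Y) (g, h) (x, y) = (snd X g x, snd Y h y)"
  by (simp add: ext_prod_def)
lemma ext_fst: "fst (ext_prod X Y) = fst X \<times> fst Y"
  by (simp add: ext_prod_def)

lemma ext_stab:
  assumes "x \<in> fst X" "y \<in> fst Y"
  shows "{k \<in> carrier (G \<times>\<times> H). snd (ext_prod X Y) k (x, y) = (x, y)} =
         {g \<in> carrier G. snd X g x = x} \<times> {h \<in> carrier H. snd Y h y = y}"
  by (auto simp: ext_act)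

lemma ext_pre:
  assumes px: "pre_gset G TG X" and py: "pre_gset H TH Y"
  shows "pre_gset (G \<times>\<times> H) (prod_topology TG TH) (ext_prod X Y)"
  unfolding pre_gset_def ext_fst
proof (intro conjI ballI)
  fix k p assume k: "k \<in> carrier (G \<times>\<times> H)" and p: "p \<in> fst X \<times> fst Y"
  then show "snd (ext_prod X Y) k p \<in> fst X \<times> fst Y"
    using pre_closed[OF px] pre_closed[OF py] by (auto simp: ext_act)
next
  fix p assume p: "p \<in> fst X \<times> fst Y"
  then show "snd (ext_prod X Y) \<one>\<^bsub>G \<times>\<times> H\<^esub> p = p"
    using pre_one[OF px] pre_one[OF py] by (auto simp: ext_act)
next
  fix k l p assume k: "k \<in> carrier (G \<times>\<times> H)" and l: "l \<in> carrier (G \<times>\<times> H)" and p: "p \<in> fst X \<times> fst Y"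
  then show "snd (ext_prod X Y) (k \<otimes>\<^bsub>G \<times>\<times> H\<^esub> l) p = snd (ext_prod X Y) k (snd (ext_prod X Y) l p)"
    using pre_mult[OF px] pre_mult[OF py] pre_closed[OF px] pre_closed[OF py] by (auto simp: ext_act)
next
  fix p assume p: "p \<in> fst X \<times> fst Y"
  then obtain x y where xy: "p = (x, y)" "x \<in> fst X" "y \<in> fst Y" by auto
  then show "openin (prod_topology TG TH) {k \<in> carrier (G \<times>\<times> H). snd (ext_prod X Y) k p = p}"
    using pre_open[OF px xy(2)] pre_open[OF py xy(3)] ext_stab[OF xy(2,3), of G H]
    by (simp add: openin_prod_Times_iff)
qed

lemma topgroup_group: "topgroup G T \<Longrightarrow> group G"
  unfolding topgroup_def by blast

lemma topgroup_translate_open: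
  assumes tg: "topgroup G T" and U: "openin T U" and g: "g \<in> carrier G"
  shows "openin T ((\<lambda>u. g \<otimes>\<^bsub>G\<^esub> u) ` U)"
proof -
  have grp: "group G" using tg topgroup_group by blast
  have top: "topspace T = carrier G" using tg unfolding topgroup_def by blast
  have mc: "continuous_map (prod_topology T T) T (\<lambda>(x, y). x \<otimes>\<^bsub>G\<^esub> y)" using tg unfolding topgroup_def by blast
  have ig: "inv\<^bsub>G\<^esub> g \<in> carrier G" using grp g by (simp add: group.inv_closed)
  have pc: "continuous_map T (prod_topology T T) (\<lambda>y. (inv\<^bsub>G\<^esub> g, y))"
    by (rule continuous_map_pairedI) (simp_all add: top ig)
  have "continuous_map T T ((\<lambda>(x, y). x \<otimes>\<^bsub>G\<^esub> y) \<circ> (\<lambda>y. (inv\<^bsub>G\<^esub> g, y)))"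
    by (rule continuous_map_compose[OF pc mc])
  then have cm: "continuous_map T T (\<lambda>y. inv\<^bsub>G\<^esub> g \<otimes>\<^bsub>G\<^esub> y)" by (simp add: o_def)
  have Usub: "U \<subseteq> carrier G" using openin_subset[OF U] top by simp
  have "(\<lambda>u. g \<otimes>\<^bsub>G\<^esub> u) ` U = {y \<in> topspace T. inv\<^bsub>G\<^esub> g \<otimes>\<^bsub>G\<^esub> y \<in> U}"
  proof (intro equalityI subsetI)
    fix y assume "y \<in> (\<lambda>u. g \<otimes>\<^bsub>G\<^esub> u) ` U"
    then obtain u where u: "u \<in> U" "y = g \<otimes>\<^bsub>G\<^esub> u" by blast
    have uc: "u \<in> carrier G" using u Usub by blast
    have yc: "y \<in> carrier G" using u(2) grp g uc by (simp add: group.is_monoid monoid.m_closed)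
    have "u = inv\<^bsub>G\<^esub> g \<otimes>\<^bsub>G\<^esub> y" using group.inv_solve_left[OF grp uc g yc] u(2) by simp
    then have "inv\<^bsub>G\<^esub> g \<otimes>\<^bsub>G\<^esub> y = u" by simp
    moreover note yc
    ultimately show "y \<in> {y \<in> topspace T. inv\<^bsub>G\<^esub> g \<otimes>\<^bsub>G\<^esub> y \<in> U}" using u top by simp
  next
    fix y assume y: "y \<in> {y \<in> topspace T. inv\<^bsub>G\<^esub> g \<otimes>\<^bsub>G\<^esub> y \<in> U}"
    then have yc: "y \<in> carrier G" and yu: "inv\<^bsub>G\<^esub> g \<otimes>\<^bsub>G\<^esub> y \<in> U" using top by auto
    have ic: "inv\<^bsub>G\<^esub> g \<otimes>\<^bsub>G\<^esub> y \<in> carrier G"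
      using grp g yc by (simp add: group.inv_closed group.is_monoid monoid.m_closed)
    have "y = g \<otimes>\<^bsub>G\<^esub> (inv\<^bsub>G\<^esub> g \<otimes>\<^bsub>G\<^esub> y)" using group.inv_solve_left[OF grp ic g yc] by simp
    then have "g \<otimes>\<^bsub>G\<^esub> (inv\<^bsub>G\<^esub> g \<otimes>\<^bsub>G\<^esub> y) = y" by simp
    then show "y \<in> (\<lambda>u. g \<otimes>\<^bsub>G\<^esub> u) ` U" using yu by (metis image_eqI)
  qed
  then show ?thesis using openin_continuous_map_preimage[OF cm U] by simp
qed

definition coset_open :: "'g monoid \<Rightarrow> 'g topology \<Rightarrow> ('a, 'g) gset \<Rightarrow> bool" where
  "coset_open G T A \<longleftrightarrow> (\<forall>x\<in>fst A. \<forall>g\<in>carrier G.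
     openin T ((\<lambda>u. g \<otimes>\<^bsub>G\<^esub> u) ` {k \<in> carrier G. snd A k x = x}))"

lemma topgroup_coset_open:
  assumes tg: "topgroup G T" and pre: "pre_gset G T A"
  shows "coset_open G T A"
  unfolding coset_open_def
proof (intro ballI)
  fix x g assume x: "x \<in> fst A" and g: "g \<in> carrier G"
  show "openin T ((\<lambda>u. g \<otimes>\<^bsub>G\<^esub> u) ` {k \<in> carrier G. snd A k x = x})"
    by (rule topgroup_translate_open[OF tg pre_open[OF pre x] g])
qed

lemma ext_coset_open:
  assumes tg: "topgroup G TG" and th: "topgroup H TH" and px: "pre_gset G TG X" and py: "pre_gset H TH Y"
  shows "coset_open (G \<times>\<times> H) (prod_topology TG TH) (ext_prod X Y)"
  unfolding coset_open_def ext_fst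
proof (intro ballI)
  fix p k assume p: "p \<in> fst X \<times> fst Y" and k: "k \<in> carrier (G \<times>\<times> H)"
  obtain x y where xy: "p = (x, y)" "x \<in> fst X" "y \<in> fst Y" using p by auto
  obtain g h where gh: "k = (g, h)" "g \<in> carrier G" "h \<in> carrier H" using k by auto
  have e: "(\<lambda>u. k \<otimes>\<^bsub>G \<times>\<times> H\<^esub> u) ` {l \<in> carrier (G \<times>\<times> H). snd (ext_prod X Y) l p = p} =
     ((\<lambda>u. g \<otimes>\<^bsub>G\<^esub> u) ` {a \<in> carrier G. snd X a x = x}) \<times> ((\<lambda>u. h \<otimes>\<^bsub>H\<^esub> u) ` {b \<in> carrier H. snd Y b y = y})"
    unfolding xy(1) ext_stab[OF xy(2,3)] gh(1) by (auto simp: image_iff)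
  show "openin (prod_topology TG TH) ((\<lambda>u. k \<otimes>\<^bsub>G \<times>\<times> H\<^esub> u) ` {l \<in> carrier (G \<times>\<times> H). snd (ext_prod X Y) l p = p})"
    unfolding e openin_prod_Times_iff
    using topgroup_translate_open[OF tg pre_open[OF px xy(2)] gh(2)]
          topgroup_translate_open[OF th pre_open[OF py xy(3)] gh(3)] by blast
qed

definition quo :: "('a, 'g) gset \<Rightarrow> ('a \<times> 'a) set \<Rightarrow> ('a set, 'g) gset" where
  "quo A R = (fst A // R, \<lambda>g C. snd A g ` C)"

definition rinv :: "'g monoid \<Rightarrow> ('a, 'g) gset \<Rightarrow> ('a \<times> 'a) set \<Rightarrow> bool" where
  "rinv G A R \<longleftrightarrow> (\<forall>g\<in>carrier G. \<forall>x y. (x, y) \<in> R \<longrightarrow> (snd A g x, snd A g y) \<in> R)"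

lemma quo_class_act:
  assumes grp: "group G" and pre: "pre_gset G T A" and eq: "equiv (fst A) R" and ri: "rinv G A R"
    and g: "g \<in> carrier G" and x: "x \<in> fst A"
  shows "snd A g ` (R `` {x}) = R `` {snd A g x}"
proof (intro equalityI subsetI)
  fix z assume "z \<in> snd A g ` (R `` {x})"
  then obtain y where y: "(x, y) \<in> R" "z = snd A g y" by blast
  then show "z \<in> R `` {snd A g x}" using ri g unfolding rinv_def by blast
next
  fix z assume "z \<in> R `` {snd A g x}"
  then have z: "(snd A g x, z) \<in> R" by simp
  have zA: "z \<in> fst A" using z eq unfolding equiv_def refl_on_def by blast
  have ig: "inv\<^bsub>G\<^esub> g \<in> carrier G" using grp g by (simp add: group.inv_closed)
  have "(snd A (inv\<^bsub>G\<^esub> g) (snd A g x), snd A (inv\<^bsub>G\<^esub> g) z) \<in> R"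
    using ri ig z unfolding rinv_def by blast
  then have "(x, snd A (inv\<^bsub>G\<^esub> g) z) \<in> R" using pre_inv[OF grp pre g x] by simp
  moreover have "z = snd A g (snd A (inv\<^bsub>G\<^esub> g) z)" using pre_inv2[OF grp pre g zA] by simp
  ultimately show "z \<in> snd A g ` (R `` {x})" by blast
qed

lemma quo_fst: "fst (quo A R) = fst A // R" by (simp add: quo_def)
lemma quo_act: "snd (quo A R) g C = snd A g ` C" by (simp add: quo_def)

lemma quo_pre:
  assumes grp: "group G" and pre: "pre_gset G T A" and eq: "equiv (fst A) R" and ri: "rinv G A R"
    and co: "coset_open G T A"
  shows "pre_gset G T (quo A R)"
  unfolding pre_gset_def quo_fst quo_act
proof (intro conjI ballI)
  fix g C assume g: "g \<in> carrier G" and C: "C \<in> fst A // R"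
  then obtain x where x: "x \<in> fst A" "C = R `` {x}" by (auto elim: quotientE)
  show "snd A g ` C \<in> fst A // R" using quo_class_act[OF grp pre eq ri g x(1)] x pre_closed[OF pre g x(1)]
    by (simp add: quotientI)
next
  fix C assume C: "C \<in> fst A // R"
  then have "C \<subseteq> fst A" using eq by (simp add: in_quotient_imp_subset)
  then show "snd A \<one>\<^bsub>G\<^esub> ` C = C" using pre_one[OF pre] by (simp add: subset_iff image_iff)
next
  fix g h C assume g: "g \<in> carrier G" and h: "h \<in> carrier G" and C: "C \<in> fst A // R"
  then have "C \<subseteq> fst A" using eq by (simp add: in_quotient_imp_subset)
  then show "snd A (g \<otimes>\<^bsub>G\<^esub> h) ` C = snd A g ` snd A h ` C"
    using pre_mult[OF pre g h] by (auto simp: image_image subset_iff intro!: image_cong)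
next
  fix C assume C: "C \<in> fst A // R"
  then obtain x where x: "x \<in> fst A" "C = R `` {x}" by (auto elim: quotientE)
  let ?V = "{g \<in> carrier G. snd A g ` C = C}"
  have V: "?V = {g \<in> carrier G. (snd A g x, x) \<in> R}"
  proof (intro Collect_cong conj_cong refl)
    fix g assume g: "g \<in> carrier G"
    have "snd A g ` C = R `` {snd A g x}" using quo_class_act[OF grp pre eq ri g x(1)] x by simp
    then show "(snd A g ` C = C) = ((snd A g x, x) \<in> R)"
      using x eq pre_closed[OF pre g x(1)] by (simp add: equiv_class_eq_iff)
  qed
  have "openin T {g \<in> carrier G. (snd A g x, x) \<in> R}"
  proof (subst openin_subopen, intro ballI)
    fix g assume gV: "g \<in> {g \<in> carrier G. (snd A g x, x) \<in> R}"
    let ?W = "(\<lambda>u. g \<otimes>\<^bsub>G\<^esub> u) ` {k \<in> carrier G. snd A k x = x}"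
    have "openin T ?W" using co x gV unfolding coset_open_def by blast
    moreover have "g \<in> ?W"
    proof -
      have "g \<otimes>\<^bsub>G\<^esub> \<one>\<^bsub>G\<^esub> = g" using grp gV by (simp add: group.is_monoid monoid.r_one)
      moreover have "\<one>\<^bsub>G\<^esub> \<in> {k \<in> carrier G. snd A k x = x}"
        using grp pre_one[OF pre x(1)] by (simp add: group.is_monoid monoid.one_closed)
      ultimately show ?thesis by (metis image_eqI)
    qed
    moreover have "?W \<subseteq> {g \<in> carrier G. (snd A g x, x) \<in> R}"
    proof
      fix y assume "y \<in> ?W"
      then obtain u where u: "u \<in> carrier G" "snd A u x = x" "y = g \<otimes>\<^bsub>G\<^esub> u" by blast
      have "snd A y x = snd A g x" using pre_mult[OF pre _ u(1) x(1), of g] gV u by simp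
      moreover have "y \<in> carrier G" using u gV grp by (simp add: group.is_monoid monoid.m_closed)
      ultimately show "y \<in> {g \<in> carrier G. (snd A g x, x) \<in> R}" using gV by simp
    qed
    ultimately show "\<exists>W. openin T W \<and> g \<in> W \<and> W \<subseteq> {g \<in> carrier G. (snd A g x, x) \<in> R}" by blast
  qed
  then show "openin T {g \<in> carrier G. snd A g ` C = C}" using V by simp
qed

lemma quo_gmap:
  assumes grp: "group G" and pre: "pre_gset G T A" and eq: "equiv (fst A) R" and ri: "rinv G A R"
  shows "gmap G A (quo A R) (\<lambda>x. R `` {x})"
  unfolding gmap_def quo_fst quo_act
  using quo_class_act[OF grp pre eq ri] by (auto intro: quotientI)

lemma quo_surj: "(\<lambda>x. R `` {x}) ` fst A = fst (quo A R)"
  unfolding quo_fst quotient_def by blast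

lemma quo_trans:
  assumes grp: "group G" and pre: "pre_gset G T A" and eq: "equiv (fst A) R" and ri: "rinv G A R"
    and tr: "transitive_gset G A"
  shows "transitive_gset G (quo A R)"
  unfolding transitive_gset_def
proof (intro conjI ballI)
  show "fst (quo A R) \<noteq> {}" using tr unfolding transitive_gset_def quo_fst by (simp add: quotient_def)
next
  fix C D assume C: "C \<in> fst (quo A R)" and D: "D \<in> fst (quo A R)"
  obtain x where x: "x \<in> fst A" "C = R `` {x}" using C unfolding quo_fst by (auto elim: quotientE)
  obtain y where y: "y \<in> fst A" "D = R `` {y}" using D unfolding quo_fst by (auto elim: quotientE)
  obtain g where g: "g \<in> carrier G" "snd A g x = y" using tr x y unfolding transitive_gset_def by blast
  have "snd (quo A R) g C = D" unfolding quo_act using quo_class_act[OF grp pre eq ri g(1) x(1)] x y g by simp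
  then show "\<exists>g\<in>carrier G. snd (quo A R) g C = D" using g by blast
qed

lemma quo_gset:
  assumes grp: "group G" and pre: "pre_gset G T A" and eq: "equiv (fst A) R" and ri: "rinv G A R"
    and co: "coset_open G T A" and tr: "transitive_gset G A"
  shows "is_gset G T (quo A R)"
  using transitive_is_gset[OF grp quo_pre[OF assms(1-5)] quo_trans[OF grp pre eq ri tr]] .

lemma stab_subgroup:
  assumes grp: "group G" and pre: "pre_gset G T X" and x: "x \<in> fst X"
  shows "subgroup {g \<in> carrier G. snd X g x = x} G"
proof (rule group.subgroupI[OF grp])
  show "{g \<in> carrier G. snd X g x = x} \<subseteq> carrier G" by blast
  have "\<one>\<^bsub>G\<^esub> \<in> carrier G" using grp by (simp add: group.is_monoid monoid.one_closed)
  then show "{g \<in> carrier G. snd X g x = x} \<noteq> {}" using pre_one[OF pre x] by blast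
next
  fix a assume a: "a \<in> {g \<in> carrier G. snd X g x = x}"
  have "snd X (inv\<^bsub>G\<^esub> a) (snd X a x) = x" using pre_inv[OF grp pre _ x] a by blast
  then show "inv\<^bsub>G\<^esub> a \<in> {g \<in> carrier G. snd X g x = x}" using a grp by (simp add: group.inv_closed)
next
  fix a b assume a: "a \<in> {g \<in> carrier G. snd X g x = x}" and b: "b \<in> {g \<in> carrier G. snd X g x = x}"
  have "snd X (a \<otimes>\<^bsub>G\<^esub> b) x = snd X a (snd X b x)" using pre_mult[OF pre _ _ x] a b by blast
  then show "a \<otimes>\<^bsub>G\<^esub> b \<in> {g \<in> carrier G. snd X g x = x}" using a b grp
    by (simp add: group.is_monoid monoid.m_closed)
qed

lemma pro_group: "pro_oligomorphic G T \<Longrightarrow> group G"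
  unfolding pro_oligomorphic_def topgroup_def by blast
lemma pro_topgroup: "pro_oligomorphic G T \<Longrightarrow> topgroup G T"
  unfolding pro_oligomorphic_def by blast
lemma pro_top: "pro_oligomorphic G T \<Longrightarrow> topspace T = carrier G"
  unfolding pro_oligomorphic_def topgroup_def by blast

lemma diag_orbits_finite:
  assumes pro: "pro_oligomorphic G T" and pre: "pre_gset G T X" and tr: "transitive_gset G X"
  shows "finite (orbit G (diag_prod X X) ` (fst X \<times> fst X))"
proof -
  have grp: "group G" using pro pro_group by blast
  have preP: "pre_gset G T (diag_prod X X)" using diag_pre[OF pre pre] .
  obtain x0 where x0: "x0 \<in> fst X" using tr unfolding transitive_gset_def by blast
  define U where "U = {g \<in> carrier G. snd X g x0 = x0}"
  have osU: "open_subgroup G T U" unfolding open_subgroup_def U_def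
    using stab_subgroup[OF grp pre x0] pre_open[OF pre x0] by blast
  have fin: "finite {double_coset G U g U | g. g \<in> carrier G}"
    using pro osU unfolding pro_oligomorphic_def by blast
  define f where "f D = orbit G (diag_prod X X) (x0, snd X (SOME k. k \<in> D) x0)" for D
  have "orbit G (diag_prod X X) ` (fst X \<times> fst X) \<subseteq> f ` {double_coset G U g U | g. g \<in> carrier G}"
  proof
    fix Ob assume "Ob \<in> orbit G (diag_prod X X) ` (fst X \<times> fst X)"
    then obtain x x' where xx: "x \<in> fst X" "x' \<in> fst X" "Ob = orbit G (diag_prod X X) (x, x')" by blast
    obtain a where a: "a \<in> carrier G" "snd X a x0 = x" using tr x0 xx unfolding transitive_gset_def by blast
    obtain b where b: "b \<in> carrier G" "snd X b x0 = x'" using tr x0 xx unfolding transitive_gset_def by blast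
    define c where "c = inv\<^bsub>G\<^esub> a \<otimes>\<^bsub>G\<^esub> b"
    have ia: "inv\<^bsub>G\<^esub> a \<in> carrier G" using grp a by (simp add: group.inv_closed)
    have c: "c \<in> carrier G" unfolding c_def using grp ia b by (simp add: group.is_monoid monoid.m_closed)
    have cx: "snd X c x0 = snd X (inv\<^bsub>G\<^esub> a) x'" unfolding c_def using pre_mult[OF pre ia b(1) x0] b by simp
    have cx0: "snd X c x0 \<in> fst X" using pre_closed[OF pre c x0] .
    have p0: "(x0, snd X c x0) \<in> fst (diag_prod X X)" using x0 cx0 by (simp add: diag_fst)
    have "snd (diag_prod X X) a (x0, snd X c x0) = (x, x')"
      using a cx pre_inv2[OF grp pre a(1) xx(2)] by (simp add: diag_act)
    then have o1: "Ob = orbit G (diag_prod X X) (x0, snd X c x0)"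
      using orbit_act[OF grp preP a(1) p0] xx by simp
    define D where "D = double_coset G U c U"
    have oneU: "\<one>\<^bsub>G\<^esub> \<in> U" using osU unfolding open_subgroup_def by (simp add: subgroup.one_closed)
    have "\<one>\<^bsub>G\<^esub> \<otimes>\<^bsub>G\<^esub> c \<otimes>\<^bsub>G\<^esub> \<one>\<^bsub>G\<^esub> \<in> D" unfolding D_def double_coset_def using oneU by blast
    then have "\<exists>k. k \<in> D" by blast
    then have "(SOME k. k \<in> D) \<in> D" by (rule someI_ex)
    then obtain u v where uv: "u \<in> U" "v \<in> U" "(SOME k. k \<in> D) = u \<otimes>\<^bsub>G\<^esub> c \<otimes>\<^bsub>G\<^esub> v"
      unfolding D_def double_coset_def by blast
    have uc: "u \<in> carrier G" "snd X u x0 = x0" using uv(1) unfolding U_def by auto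
    have vc: "v \<in> carrier G" "snd X v x0 = x0" using uv(2) unfolding U_def by auto
    have ucc: "u \<otimes>\<^bsub>G\<^esub> c \<in> carrier G" using grp uc c by (simp add: group.is_monoid monoid.m_closed)
    have "snd X (SOME k. k \<in> D) x0 = snd X (u \<otimes>\<^bsub>G\<^esub> c) (snd X v x0)"
      using uv(3) pre_mult[OF pre ucc vc(1) x0] by simp
    also have "\<dots> = snd X u (snd X c x0)" using vc(2) pre_mult[OF pre uc(1) c x0] by simp
    finally have "(x0, snd X (SOME k. k \<in> D) x0) = snd (diag_prod X X) u (x0, snd X c x0)"
      using uc(2) by (simp add: diag_act)
    then have "f D = orbit G (diag_prod X X) (x0, snd X c x0)"
      unfolding f_def using orbit_act[OF grp preP uc(1) p0] by simp
    then have "Ob = f D" using o1 by simp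
    moreover have "D \<in> {double_coset G U g U | g. g \<in> carrier G}" unfolding D_def using c by blast
    ultimately show "Ob \<in> f ` {double_coset G U g U | g. g \<in> carrier G}" by blast
  qed
  then show ?thesis using fin by (meson finite_imageI finite_subset)
qed

lemma diag_gset:
  assumes pro: "pro_oligomorphic G T" and X: "is_gset G T X" and tr: "transitive_gset G X"
  shows "is_gset G T (diag_prod X X)"
  using diag_orbits_finite[OF pro is_gset_pre[OF X] tr] diag_pre[OF is_gset_pre[OF X] is_gset_pre[OF X]]
  by (intro is_gsetI) (simp_all add: diag_fst)

definition two :: "(nat \<times> 'g set, 'g) gset" where "two = ({(0, {}), (1, {})}, \<lambda>g z. z)"
definition emp :: "(nat \<times> 'g set, 'g) gset" where "emp = ({}, \<lambda>g z. z)"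

lemma two_gset: assumes "topspace T = carrier G" shows "is_gset G T (two :: (nat \<times> 'g set, 'g) gset)"
proof (rule is_gsetI)
  show "pre_gset G T (two :: (nat \<times> 'g set, 'g) gset)" unfolding pre_gset_def two_def
    using assms openin_topspace[of T] by simp
  show "finite (orbit G two ` fst (two :: (nat \<times> 'g set, 'g) gset))" unfolding two_def by simp
qed

lemma emp_gset: "is_gset G T (emp :: (nat \<times> 'g set, 'g) gset)"
  unfolding is_gset_def emp_def by simp

locale exf =
  fixes G :: "'g monoid" and TG :: "'g topology" and K :: "'k monoid" and TK :: "'k topology"
    and Fo :: "(nat \<times> 'g set, 'g) gset \<Rightarrow> (nat \<times> 'k set, 'k) gset"
    and Fm :: "(nat \<times> 'g set, 'g) gset \<Rightarrow> (nat \<times> 'g set, 'g) gset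
                  \<Rightarrow> (nat \<times> 'g set \<Rightarrow> nat \<times> 'g set) \<Rightarrow> (nat \<times> 'k set \<Rightarrow> nat \<times> 'k set)"
    and X :: "(nat \<times> 'g set, 'g) gset"
  assumes pro: "pro_oligomorphic G TG" and ex: "exact_functor G TG K TK Fo Fm"
    and Xg: "is_gset G TG X" and Xt: "transitive_gset G X"
begin

lemma grp: "group G" using pro by (rule pro_group)
lemma top: "topspace TG = carrier G" using pro by (rule pro_top)

lemma isfun: "is_functor G TG K TK Fo Fm" using ex unfolding exact_functor_def by (rule conjunct1)

lemma F_gset: assumes "is_gset G TG A" shows "is_gset K TK (Fo A)"
proof -
  have "\<forall>X. is_gset G TG X \<longrightarrow> is_gset K TK (Fo X)" using isfun unfolding is_functor_def by (rule conjunct1)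
  then show ?thesis using assms by blast
qed

lemma F_gmap: assumes "is_gset G TG A" "is_gset G TG B" "gmap G A B f"
  shows "gmap K (Fo A) (Fo B) (Fm A B f)"
proof -
  have "\<forall>X Y f. is_gset G TG X \<and> is_gset G TG Y \<and> gmap G X Y f \<longrightarrow> gmap K (Fo X) (Fo Y) (Fm X Y f)"
    using isfun unfolding is_functor_def by (elim conjE)
  then show ?thesis using assms by blast
qed

lemma F_cong: assumes "is_gset G TG A" "is_gset G TG B" "gmap G A B f" "gmap G A B f'"
    "\<And>x. x \<in> fst A \<Longrightarrow> f x = f' x" "z \<in> fst (Fo A)"
  shows "Fm A B f z = Fm A B f' z"
proof -
  have "\<forall>X Y f f'. is_gset G TG X \<and> is_gset G TG Y \<and> gmap G X Y f \<and> gmap G X Y f' \<and>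
        (\<forall>x\<in>fst X. f x = f' x) \<longrightarrow> (\<forall>z\<in>fst (Fo X). Fm X Y f z = Fm X Y f' z)"
    using isfun unfolding is_functor_def by (elim conjE)
  then show ?thesis using assms by blast
qed

lemma F_id: assumes "is_gset G TG A" "z \<in> fst (Fo A)" shows "Fm A A id z = z"
proof -
  have "\<forall>X. is_gset G TG X \<longrightarrow> (\<forall>z\<in>fst (Fo X). Fm X X id z = z)"
    using isfun unfolding is_functor_def by (elim conjE)
  then show ?thesis using assms by blast
qed

lemma F_comp: assumes "is_gset G TG A" "is_gset G TG B" "is_gset G TG C" "gmap G A B f" "gmap G B C g"
    "z \<in> fst (Fo A)"
  shows "Fm A C (g \<circ> f) z = Fm B C g (Fm A B f z)"
proof -
  have "\<forall>X Y Z f g. is_gset G TG X \<and> is_gset G TG Y \<and> is_gset G TG Z \<and>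
        gmap G X Y f \<and> gmap G Y Z g \<longrightarrow>
        (\<forall>z\<in>fst (Fo X). Fm X Z (g \<circ> f) z = Fm Y Z g (Fm X Y f z))"
    using isfun unfolding is_functor_def by (elim conjE)
  then show ?thesis using assms by blast
qed

lemma F_prod: assumes "is_gset G TG A" "is_gset G TG B" "is_gset G TG Q" "is_product G A B Q p1 p2"
  shows "is_product K (Fo A) (Fo B) (Fo Q) (Fm Q A p1) (Fm Q B p2)"
proof -
  have "\<forall>A B P p1 p2. is_gset G TG A \<and> is_gset G TG B \<and> is_gset G TG P \<and>
        is_product G A B P p1 p2 \<longrightarrow>
        is_product K (Fo A) (Fo B) (Fo P) (Fm P A p1) (Fm P B p2)"
    using ex unfolding exact_functor_def by (elim conjE)
  then show ?thesis using assms by blast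
qed

lemma F_eq: assumes "is_gset G TG A" "is_gset G TG B" "is_gset G TG E" "gmap G A B f" "gmap G A B g"
    "is_equalizer G A B f g E e"
  shows "is_equalizer K (Fo A) (Fo B) (Fm A B f) (Fm A B g) (Fo E) (Fm E A e)"
proof -
  have "\<forall>A B f g E e. is_gset G TG A \<and> is_gset G TG B \<and> is_gset G TG E \<and>
        gmap G A B f \<and> gmap G A B g \<and> is_equalizer G A B f g E e \<longrightarrow>
        is_equalizer K (Fo A) (Fo B) (Fm A B f) (Fm A B g) (Fo E) (Fm E A e)"
    using ex unfolding exact_functor_def by (elim conjE)
  then show ?thesis using assms by blast
qed

lemma F_init: assumes "is_gset G TG A" "fst A = {}" shows "fst (Fo A) = {}"
proof -
  have "\<forall>X. is_gset G TG X \<and> is_initial X \<longrightarrow> is_initial (Fo X)"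
    using ex unfolding exact_functor_def by (elim conjE)
  then show ?thesis using assms unfolding is_initial_def by blast
qed

lemma F_coprod: assumes "is_gset G TG A" "is_gset G TG B" "is_gset G TG C" "is_coproduct G A B C i1 i2"
  shows "is_coproduct K (Fo A) (Fo B) (Fo C) (Fm A C i1) (Fm B C i2)"
proof -
  have "\<forall>A B C i1 i2. is_gset G TG A \<and> is_gset G TG B \<and> is_gset G TG C \<and>
        is_coproduct G A B C i1 i2 \<longrightarrow>
        is_coproduct K (Fo A) (Fo B) (Fo C) (Fm A C i1) (Fm B C i2)"
    using ex unfolding exact_functor_def by (elim conjE)
  then show ?thesis using assms by blast
qed

lemma F_mono:
  assumes A: "is_gset G TG A" and B: "is_gset G TG B" and e: "gmap G A B e" and inj: "inj_on e (fst A)"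
  shows "inj_on (Fm A B e) (fst (Fo A))"
proof -
  define chi where "chi z = (if z \<in> e ` fst A then (1::nat, {}::'g set) else (0, {}))" for z
  define c1 where "c1 z = (1::nat, {}::'g set)" for z :: "nat \<times> 'g set"
  have preB: "pre_gset G TG B" using B by (rule is_gset_pre)
  have eA: "e ` fst A \<subseteq> fst B" using e unfolding gmap_def by blast
  have inv: "snd B g z \<in> e ` fst A \<longleftrightarrow> z \<in> e ` fst A" if g: "g \<in> carrier G" and z: "z \<in> fst B" for g z
  proof
    assume "z \<in> e ` fst A"
    then obtain a where a: "a \<in> fst A" "z = e a" by blast
    have "snd B g z = e (snd (A) g a)" using e a g unfolding gmap_def by simp
    moreover have "snd A g a \<in> fst A" using pre_closed[OF is_gset_pre[OF A] g a(1)] .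
    ultimately show "snd B g z \<in> e ` fst A" by blast
  next
    assume "snd B g z \<in> e ` fst A"
    then obtain a where a: "a \<in> fst A" "snd B g z = e a" by blast
    have ig: "inv\<^bsub>G\<^esub> g \<in> carrier G" using grp g by (simp add: group.inv_closed)
    have "z = snd B (inv\<^bsub>G\<^esub> g) (snd B g z)" using pre_inv[OF grp preB g z] by simp
    also have "\<dots> = e (snd A (inv\<^bsub>G\<^esub> g) a)" using e a ig unfolding gmap_def by simp
    finally show "z \<in> e ` fst A" using pre_closed[OF is_gset_pre[OF A] ig a(1)] by blast
  qed
  have two: "is_gset G TG (two :: (nat \<times> 'g set, 'g) gset)" using top by (rule two_gset)
  have gchi: "gmap G B two chi" unfolding gmap_def two_def chi_def using inv by auto
  have gc1: "gmap G B two c1" unfolding gmap_def two_def c1_def by auto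
  have "is_equalizer G B two chi c1 A e"
    unfolding is_equalizer_def using e inj eA by (auto simp: chi_def c1_def)
  then have "is_equalizer K (Fo B) (Fo two) (Fm B two chi) (Fm B two c1) (Fo A) (Fm A B e)"
    using F_eq[OF B two A gchi gc1] by simp
  then show ?thesis unfolding is_equalizer_def by blast
qed

end

context exf begin

definition P0 where "P0 = diag_prod X X"
definition P where "P = canon G P0"
definition encP where "encP = cenc G P0"
definition decP where "decP = dec G P0"
definition pi1 where "pi1 = (\<lambda>z. fst (decP z))"
definition pi2 where "pi2 = (\<lambda>z. snd (decP z))"
definition sub where "sub S = (S, snd P0)"
definition Sc where "Sc S = canon G (sub S)"
definition eS where "eS S = (\<lambda>z. encP (dec G (sub S) z))"
definition beta where "beta z = (Fm P X pi1 z, Fm P X pi2 z)"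
definition hat where "hat S = beta ` (Fm (Sc S) P (eS S) ` fst (Fo (Sc S)))"
definition invs where "invs S \<longleftrightarrow> S \<subseteq> fst X \<times> fst X \<and> (\<forall>g\<in>carrier G. \<forall>p\<in>S. snd P0 g p \<in> S)"

lemma P0_gset: "is_gset G TG P0" unfolding P0_def using diag_gset[OF pro Xg Xt] .
lemma P0_fst: "fst P0 = fst X \<times> fst X" unfolding P0_def by (simp add: diag_fst)
lemma P0_act: "snd P0 g (x, y) = (snd X g x, snd X g y)" unfolding P0_def by (simp add: diag_act)
lemma encP_inj: "inj_on encP (fst P0)" unfolding encP_def using cenc_inj[OF grp P0_gset] .
lemma P_gset: "is_gset G TG P" unfolding P_def canon_def using transp_gset[OF _ P0_gset] encP_inj encP_def by simp
lemma P_fst: "fst P = encP ` (fst X \<times> fst X)" unfolding P_def canon_def encP_def by (simp add: P0_fst)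
lemma decP_encP: "p \<in> fst X \<times> fst X \<Longrightarrow> decP (encP p) = p"
  unfolding decP_def dec_def using encP_inj P0_fst encP_def by (simp add: inv_into_f_f)
lemma decP_in: "z \<in> fst P \<Longrightarrow> decP z \<in> fst X \<times> fst X"
  using P_fst decP_encP by auto
lemma encP_decP: "z \<in> fst P \<Longrightarrow> encP (decP z) = z"
  using P_fst decP_encP by auto
lemma decP_gmap: "gmap G P P0 decP"
  unfolding P_def canon_def decP_def dec_def using transp_gmap_inv[OF _ is_gset_pre[OF P0_gset]] encP_inj encP_def
  by simp
lemma encP_gmap: "gmap G P0 P encP"
  unfolding P_def canon_def using transp_gmap encP_inj encP_def by simp

lemma pi1_gmap: "gmap G P X pi1"
  unfolding gmap_def
proof (intro conjI ballI)
  fix z assume "z \<in> fst P" then show "pi1 z \<in> fst X" unfolding pi1_def using decP_in[of z] by (cases "decP z") auto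
next
  fix g z assume g: "g \<in> carrier G" and z: "z \<in> fst P"
  obtain a b where ab: "decP z = (a, b)" using surj_pair[of "decP z"] by blast
  have "decP (snd P g z) = snd P0 g (decP z)" using decP_gmap g z unfolding gmap_def by blast
  then show "pi1 (snd P g z) = snd X g (pi1 z)" unfolding pi1_def using ab by (simp add: P0_act)
qed

lemma pi2_gmap: "gmap G P X pi2"
  unfolding gmap_def
proof (intro conjI ballI)
  fix z assume "z \<in> fst P" then show "pi2 z \<in> fst X" unfolding pi2_def using decP_in[of z] by (cases "decP z") auto
next
  fix g z assume g: "g \<in> carrier G" and z: "z \<in> fst P"
  obtain a b where ab: "decP z = (a, b)" using surj_pair[of "decP z"] by blast
  have "decP (snd P g z) = snd P0 g (decP z)" using decP_gmap g z unfolding gmap_def by blast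
  then show "pi2 (snd P g z) = snd X g (pi2 z)" unfolding pi2_def using ab by (simp add: P0_act)
qed

lemma P_prod: "is_product G X X P pi1 pi2"
  unfolding is_product_def
proof (intro conjI)
  show "gmap G P X pi1" by (rule pi1_gmap)
  show "gmap G P X pi2" by (rule pi2_gmap)
  have "(\<lambda>z. (pi1 z, pi2 z)) = decP" unfolding pi1_def pi2_def by simp
  moreover have "bij_betw decP (fst P) (fst X \<times> fst X)"
  proof -
    have "bij_betw encP (fst X \<times> fst X) (fst P)" using encP_inj P0_fst P_fst by (simp add: bij_betw_def)
    then have "bij_betw (inv_into (fst X \<times> fst X) encP) (fst P) (fst X \<times> fst X)" by (rule bij_betw_inv_into)
    then show ?thesis unfolding decP_def dec_def using P0_fst encP_def by simp
  qed
  ultimately show "bij_betw (\<lambda>z. (pi1 z, pi2 z)) (fst P) (fst X \<times> fst X)" by simp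
qed

lemma beta_bij: "bij_betw beta (fst (Fo P)) (fst (Fo X) \<times> fst (Fo X))"
  using F_prod[OF Xg Xg P_gset P_prod] unfolding is_product_def beta_def by blast

lemma beta_into: "z \<in> fst (Fo P) \<Longrightarrow> beta z \<in> fst (Fo X) \<times> fst (Fo X)"
  using beta_bij unfolding bij_betw_def by blast

lemma invs_sub: "invs S \<Longrightarrow> S \<subseteq> fst X \<times> fst X" unfolding invs_def by blast
lemma invs_act: "invs S \<Longrightarrow> g \<in> carrier G \<Longrightarrow> p \<in> S \<Longrightarrow> snd P0 g p \<in> S" unfolding invs_def by blast

lemma sub_gset: "invs S \<Longrightarrow> is_gset G TG (sub S)"
  unfolding sub_def using restr_gset[OF P0_gset] P0_fst unfolding invs_def by simp
lemma sub_fst: "fst (sub S) = S" unfolding sub_def by simp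
lemma sub_inj: "invs S \<Longrightarrow> inj_on (cenc G (sub S)) S"
  using cenc_inj[OF grp sub_gset] sub_fst by metis
lemma sub_inj': "invs S \<Longrightarrow> inj_on (cenc G (sub S)) (fst (sub S))"
  unfolding sub_fst by (rule sub_inj)
lemma Sc_gset: "invs S \<Longrightarrow> is_gset G TG (Sc S)"
  unfolding Sc_def canon_def using transp_gset[OF _ sub_gset] sub_inj sub_fst by metis
lemma Sc_fst: "fst (Sc S) = cenc G (sub S) ` S" unfolding Sc_def canon_def by (simp add: sub_fst)
lemma dec_sub: "invs S \<Longrightarrow> p \<in> S \<Longrightarrow> dec G (sub S) (cenc G (sub S) p) = p"
  unfolding dec_def sub_fst by (simp add: inv_into_f_f sub_inj)
lemma eS_enc: "invs S \<Longrightarrow> p \<in> S \<Longrightarrow> eS S (cenc G (sub S) p) = encP p"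
  unfolding eS_def using dec_sub by simp

lemma eS_gmap: assumes S: "invs S" shows "gmap G (Sc S) P (eS S)"
proof -
  have g1: "gmap G (Sc S) (sub S) (dec G (sub S))"
    unfolding Sc_def canon_def dec_def using transp_gmap_inv[OF sub_inj'[OF S] is_gset_pre[OF sub_gset[OF S]]] .
  have g2: "gmap G (sub S) P0 (\<lambda>p. p)" unfolding gmap_def sub_def using invs_sub[OF S] P0_fst by auto
  have "gmap G (Sc S) P (encP \<circ> ((\<lambda>p. p) \<circ> dec G (sub S)))"
    by (rule gmap_comp[OF gmap_comp[OF g1 g2] encP_gmap])
  then show ?thesis unfolding eS_def by (simp add: o_def)
qed

lemma eS_img: "invs S \<Longrightarrow> eS S ` fst (Sc S) = encP ` S"
  unfolding Sc_fst using eS_enc by (auto simp: image_image)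

lemma eS_inj: assumes S: "invs S" shows "inj_on (eS S) (fst (Sc S))"
proof (rule inj_onI)
  fix z w assume z: "z \<in> fst (Sc S)" and w: "w \<in> fst (Sc S)" and eq: "eS S z = eS S w"
  obtain p where p: "p \<in> S" "z = cenc G (sub S) p" using z Sc_fst by auto
  obtain q where q: "q \<in> S" "w = cenc G (sub S) q" using w Sc_fst by auto
  have "encP p = encP q" using eq p q eS_enc[OF S] by simp
  then have "p = q" using encP_inj P0_fst invs_sub[OF S] p q by (auto dest: inj_onD)
  then show "z = w" using p q by simp
qed

lemma decP_eS: assumes S: "invs S" and w: "w \<in> fst (Sc S)" shows "decP (eS S w) \<in> S"
proof -
  obtain p where p: "p \<in> S" "w = cenc G (sub S) p" using w Sc_fst by auto
  then show ?thesis using eS_enc[OF S] decP_encP invs_sub[OF S] by auto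
qed

lemma factor:
  assumes T: "is_gset G TG T" and u: "gmap G T X u" and v: "gmap G T X v" and S: "invs S"
    and uv: "\<And>t. t \<in> fst T \<Longrightarrow> (u t, v t) \<in> S" and z: "z \<in> fst (Fo T)"
  shows "(Fm T X u z, Fm T X v z) \<in> hat S"
proof -
  define m where "m = cenc G (sub S) \<circ> (\<lambda>t. (u t, v t))"
  have guv: "gmap G T (sub S) (\<lambda>t. (u t, v t))"
    unfolding gmap_def sub_def using uv u v by (auto simp: gmap_def P0_act)
  have gm: "gmap G T (Sc S) m"
    unfolding m_def Sc_def canon_def using gmap_comp[OF guv transp_gmap[OF sub_inj'[OF S]]] .
  have ge: "gmap G (Sc S) P (eS S)" by (rule eS_gmap[OF S])
  have gem: "gmap G T P (eS S \<circ> m)" by (rule gmap_comp[OF gm ge])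
  have em: "(eS S \<circ> m) t = encP (u t, v t)" if "t \<in> fst T" for t
    using eS_enc[OF S uv[OF that]] unfolding m_def by simp
  have w: "Fm T (Sc S) m z \<in> fst (Fo (Sc S))"
    using F_gmap[OF T Sc_gset[OF S] gm] z unfolding gmap_def by blast
  have key: "Fm T X (q \<circ> (eS S \<circ> m)) z = Fm P X q (Fm (Sc S) P (eS S) (Fm T (Sc S) m z))"
    if q: "gmap G P X q" for q
  proof -
    have "Fm T X (q \<circ> (eS S \<circ> m)) z = Fm P X q (Fm T P (eS S \<circ> m) z)"
      by (rule F_comp[OF T P_gset Xg gem q z])
    also have "Fm T P (eS S \<circ> m) z = Fm (Sc S) P (eS S) (Fm T (Sc S) m z)"
      by (rule F_comp[OF T Sc_gset[OF S] P_gset gm ge z])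
    finally show ?thesis .
  qed
  have "Fm T X u z = Fm T X (pi1 \<circ> (eS S \<circ> m)) z"
  proof (rule F_cong[OF T Xg u gmap_comp[OF gem pi1_gmap] _ z])
    fix t assume t: "t \<in> fst T"
    have "(u t, v t) \<in> fst X \<times> fst X" using uv[OF t] invs_sub[OF S] by blast
    then show "u t = (pi1 \<circ> (eS S \<circ> m)) t" using em[OF t] decP_encP unfolding pi1_def by simp
  qed
  moreover have "Fm T X v z = Fm T X (pi2 \<circ> (eS S \<circ> m)) z"
  proof (rule F_cong[OF T Xg v gmap_comp[OF gem pi2_gmap] _ z])
    fix t assume t: "t \<in> fst T"
    have "(u t, v t) \<in> fst X \<times> fst X" using uv[OF t] invs_sub[OF S] by blast
    then show "v t = (pi2 \<circ> (eS S \<circ> m)) t" using em[OF t] decP_encP unfolding pi2_def by simp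
  qed
  ultimately have "(Fm T X u z, Fm T X v z) = beta (Fm (Sc S) P (eS S) (Fm T (Sc S) m z))"
    unfolding beta_def using key[OF pi1_gmap] key[OF pi2_gmap] by simp
  then show ?thesis unfolding hat_def using w by blast
qed

end

lemma bij_image_filter: assumes "bij_betw f A B" shows "f ` {z \<in> A. Q (f z)} = {q \<in> B. Q q}"
  using assms unfolding bij_betw_def by blast

context exf begin

lemma invs_full: "invs (fst X \<times> fst X)"
  unfolding invs_def using pre_closed[OF is_gset_pre[OF Xg]] by (auto simp: P0_act)

lemma hat_into: assumes S: "invs S" shows "hat S \<subseteq> fst (Fo X) \<times> fst (Fo X)"
proof
  fix y assume "y \<in> hat S"
  then obtain w where w: "w \<in> fst (Fo (Sc S))" "y = beta (Fm (Sc S) P (eS S) w)" unfolding hat_def by blast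
  have "Fm (Sc S) P (eS S) w \<in> fst (Fo P)"
    using F_gmap[OF Sc_gset[OF S] P_gset eS_gmap[OF S]] w(1) unfolding gmap_def by blast
  then show "y \<in> fst (Fo X) \<times> fst (Fo X)" using w(2) beta_into by simp
qed

lemma hat_cover: "fst (Fo X) \<times> fst (Fo X) \<subseteq> hat (fst X \<times> fst X)"
proof
  fix q assume q: "q \<in> fst (Fo X) \<times> fst (Fo X)"
  then obtain z where z: "z \<in> fst (Fo P)" "q = beta z" using beta_bij unfolding bij_betw_def by blast
  have "(Fm P X pi1 z, Fm P X pi2 z) \<in> hat (fst X \<times> fst X)"
  proof (rule factor[OF P_gset pi1_gmap pi2_gmap invs_full _ z(1)])
    fix t assume "t \<in> fst P" then show "(pi1 t, pi2 t) \<in> fst X \<times> fst X"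
      using decP_in[of t] unfolding pi1_def pi2_def by simp
  qed
  then show "q \<in> hat (fst X \<times> fst X)" using z(2) unfolding beta_def by simp
qed

lemma hat_mono: assumes A: "invs A" and B: "invs B" and AB: "A \<subseteq> B" shows "hat A \<subseteq> hat B"
proof
  fix y assume "y \<in> hat A"
  then obtain w where w: "w \<in> fst (Fo (Sc A))" "y = beta (Fm (Sc A) P (eS A) w)" unfolding hat_def by blast
  have g1: "gmap G (Sc A) X (pi1 \<circ> eS A)" by (rule gmap_comp[OF eS_gmap[OF A] pi1_gmap])
  have g2: "gmap G (Sc A) X (pi2 \<circ> eS A)" by (rule gmap_comp[OF eS_gmap[OF A] pi2_gmap])
  have "(Fm (Sc A) X (pi1 \<circ> eS A) w, Fm (Sc A) X (pi2 \<circ> eS A) w) \<in> hat B"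
  proof (rule factor[OF Sc_gset[OF A] g1 g2 B _ w(1)])
    fix t assume "t \<in> fst (Sc A)"
    then have "decP (eS A t) \<in> B" using decP_eS[OF A] AB by blast
    then show "((pi1 \<circ> eS A) t, (pi2 \<circ> eS A) t) \<in> B" unfolding pi1_def pi2_def by simp
  qed
  moreover have "Fm (Sc A) X (pi1 \<circ> eS A) w = Fm P X pi1 (Fm (Sc A) P (eS A) w)"
    by (rule F_comp[OF Sc_gset[OF A] P_gset Xg eS_gmap[OF A] pi1_gmap w(1)])
  moreover have "Fm (Sc A) X (pi2 \<circ> eS A) w = Fm P X pi2 (Fm (Sc A) P (eS A) w)"
    by (rule F_comp[OF Sc_gset[OF A] P_gset Xg eS_gmap[OF A] pi2_gmap w(1)])
  ultimately show "y \<in> hat B" using w(2) unfolding beta_def by simp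
qed

lemma invs_empty: "invs {}" unfolding invs_def by simp

lemma hat_empty: "hat {} = {}"
proof -
  have "fst (Sc {}) = {}" by (simp add: Sc_fst)
  then have "fst (Fo (Sc {})) = {}" using F_init[OF Sc_gset[OF invs_empty]] by simp
  then show ?thesis unfolding hat_def by simp
qed

lemma invs_Un: "invs A \<Longrightarrow> invs B \<Longrightarrow> invs (A \<union> B)"
  unfolding invs_def by blast

lemma hat_union:
  assumes A: "invs A" and B: "invs B" and AB: "A \<inter> B = {}"
  shows "hat (A \<union> B) = hat A \<union> hat B" and "hat A \<inter> hat B = {}"
proof -
  define C where "C = A \<union> B"
  have Ci: "invs C" unfolding C_def using invs_Un[OF A B] .
  define i1 where "i1 = cenc G (sub C) \<circ> dec G (sub A)"
  define i2 where "i2 = cenc G (sub C) \<circ> dec G (sub B)"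
  have incl: "gmap G (sub D) (sub C) (\<lambda>p. p)" if "D \<subseteq> C" for D
    unfolding gmap_def sub_def using that by auto
  have decg: "gmap G (Sc D) (sub D) (dec G (sub D))" if "invs D" for D
    unfolding Sc_def canon_def dec_def using transp_gmap_inv[OF sub_inj'[OF that] is_gset_pre[OF sub_gset[OF that]]] .
  have encg: "gmap G (sub C) (Sc C) (cenc G (sub C))"
    unfolding Sc_def canon_def using transp_gmap[OF sub_inj'[OF Ci]] .
  have inclA: "gmap G (sub A) (sub C) (\<lambda>p. p)" using incl C_def by simp
  have inclB: "gmap G (sub B) (sub C) (\<lambda>p. p)" using incl C_def by simp
  have gi1: "gmap G (Sc A) (Sc C) i1"
    unfolding i1_def using gmap_comp[OF gmap_comp[OF decg[OF A] inclA] encg] by (simp add: o_def)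
  have gi2: "gmap G (Sc B) (Sc C) i2"
    unfolding i2_def using gmap_comp[OF gmap_comp[OF decg[OF B] inclB] encg] by (simp add: o_def)
  have i1e: "i1 (cenc G (sub A) p) = cenc G (sub C) p" if "p \<in> A" for p
    unfolding i1_def using dec_sub[OF A that] by simp
  have i2e: "i2 (cenc G (sub B) p) = cenc G (sub C) p" if "p \<in> B" for p
    unfolding i2_def using dec_sub[OF B that] by simp
  have injC: "inj_on (cenc G (sub C)) C" by (rule sub_inj[OF Ci])
  have im1: "i1 ` fst (Sc A) = cenc G (sub C) ` A" unfolding Sc_fst using i1e by (auto simp: image_image)
  have im2: "i2 ` fst (Sc B) = cenc G (sub C) ` B" unfolding Sc_fst using i2e by (auto simp: image_image)
  have inj1: "inj_on i1 (fst (Sc A))"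
  proof (rule inj_onI)
    fix z w assume z: "z \<in> fst (Sc A)" and w: "w \<in> fst (Sc A)" and eq: "i1 z = i1 w"
    obtain p where p: "p \<in> A" "z = cenc G (sub A) p" using z Sc_fst by auto
    obtain q where q: "q \<in> A" "w = cenc G (sub A) q" using w Sc_fst by auto
    have "cenc G (sub C) p = cenc G (sub C) q" using eq p q i1e by simp
    then have "p = q" using injC p q C_def by (auto dest: inj_onD)
    then show "z = w" using p q by simp
  qed
  have inj2: "inj_on i2 (fst (Sc B))"
  proof (rule inj_onI)
    fix z w assume z: "z \<in> fst (Sc B)" and w: "w \<in> fst (Sc B)" and eq: "i2 z = i2 w"
    obtain p where p: "p \<in> B" "z = cenc G (sub B) p" using z Sc_fst by auto
    obtain q where q: "q \<in> B" "w = cenc G (sub B) q" using w Sc_fst by auto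
    have "cenc G (sub C) p = cenc G (sub C) q" using eq p q i2e by simp
    then have "p = q" using injC p q C_def by (auto dest: inj_onD)
    then show "z = w" using p q by simp
  qed
  have disj: "cenc G (sub C) ` A \<inter> cenc G (sub C) ` B = {}"
  proof -
    have "cenc G (sub C) ` A \<inter> cenc G (sub C) ` B = cenc G (sub C) ` (A \<inter> B)"
      using inj_on_image_Int[OF injC, of A B] C_def by auto
    then show ?thesis using AB by simp
  qed
  have cop: "is_coproduct G (Sc A) (Sc B) (Sc C) i1 i2"
    unfolding is_coproduct_def using gi1 gi2 inj1 inj2 im1 im2 disj
    by (simp add: Sc_fst C_def image_Un)
  have Fcop: "is_coproduct K (Fo (Sc A)) (Fo (Sc B)) (Fo (Sc C)) (Fm (Sc A) (Sc C) i1) (Fm (Sc B) (Sc C) i2)"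
    by (rule F_coprod[OF Sc_gset[OF A] Sc_gset[OF B] Sc_gset[OF Ci] cop])
  define Phi where "Phi x = beta (Fm (Sc C) P (eS C) x)" for x
  have c1: "Fm (Sc C) P (eS C) (Fm (Sc D) (Sc C) i w) = Fm (Sc D) P (eS D) w"
    if D: "invs D" and DC: "D \<subseteq> C" and gi: "gmap G (Sc D) (Sc C) i"
      and ie: "\<And>p. p \<in> D \<Longrightarrow> i (cenc G (sub D) p) = cenc G (sub C) p"
      and w: "w \<in> fst (Fo (Sc D))" for D i w
  proof -
    have "Fm (Sc C) P (eS C) (Fm (Sc D) (Sc C) i w) = Fm (Sc D) P (eS C \<circ> i) w"
      using F_comp[OF Sc_gset[OF D] Sc_gset[OF Ci] P_gset gi eS_gmap[OF Ci] w] by simp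
    also have "\<dots> = Fm (Sc D) P (eS D) w"
    proof (rule F_cong[OF Sc_gset[OF D] P_gset gmap_comp[OF gi eS_gmap[OF Ci]] eS_gmap[OF D] _ w])
      fix t assume "t \<in> fst (Sc D)"
      then obtain p where p: "p \<in> D" "t = cenc G (sub D) p" using Sc_fst by auto
      have pC: "p \<in> C" using p(1) DC by blast
      have "(eS C \<circ> i) t = eS C (cenc G (sub C) p)" using ie[OF p(1)] p(2) by simp
      also have "\<dots> = encP p" by (rule eS_enc[OF Ci pC])
      also have "\<dots> = eS D t" using eS_enc[OF D p(1)] p(2) by simp
      finally show "(eS C \<circ> i) t = eS D t" .
    qed
    finally show ?thesis .
  qed
  have hA: "hat A = Phi ` (Fm (Sc A) (Sc C) i1 ` fst (Fo (Sc A)))"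
    unfolding hat_def Phi_def image_image using c1[OF A _ gi1 i1e] C_def by (auto intro!: image_cong)
  have hB: "hat B = Phi ` (Fm (Sc B) (Sc C) i2 ` fst (Fo (Sc B)))"
    unfolding hat_def Phi_def image_image using c1[OF B _ gi2 i2e] C_def by (auto intro!: image_cong)
  have FC: "fst (Fo (Sc C)) = Fm (Sc A) (Sc C) i1 ` fst (Fo (Sc A)) \<union> Fm (Sc B) (Sc C) i2 ` fst (Fo (Sc B))"
    using Fcop unfolding is_coproduct_def by blast
  have hC: "hat C = Phi ` fst (Fo (Sc C))" unfolding hat_def Phi_def by (simp add: image_image)
  show "hat (A \<union> B) = hat A \<union> hat B" using hC FC hA hB C_def by (simp add: image_Un)
  have injPhi: "inj_on Phi (fst (Fo (Sc C)))"
  proof (rule inj_onI)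
    fix x y assume x: "x \<in> fst (Fo (Sc C))" and y: "y \<in> fst (Fo (Sc C))" and eq: "Phi x = Phi y"
    have gF: "gmap K (Fo (Sc C)) (Fo P) (Fm (Sc C) P (eS C))"
      by (rule F_gmap[OF Sc_gset[OF Ci] P_gset eS_gmap[OF Ci]])
    have xP: "Fm (Sc C) P (eS C) x \<in> fst (Fo P)" using gF x unfolding gmap_def by blast
    have yP: "Fm (Sc C) P (eS C) y \<in> fst (Fo P)" using gF y unfolding gmap_def by blast
    have "Fm (Sc C) P (eS C) x = Fm (Sc C) P (eS C) y"
      using eq xP yP beta_bij unfolding Phi_def bij_betw_def by (auto dest: inj_onD)
    then show "x = y" using F_mono[OF Sc_gset[OF Ci] P_gset eS_gmap[OF Ci] eS_inj[OF Ci]] x y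
      by (auto dest: inj_onD)
  qed
  have s1: "Fm (Sc A) (Sc C) i1 ` fst (Fo (Sc A)) \<subseteq> fst (Fo (Sc C))" using FC by blast
  have s2: "Fm (Sc B) (Sc C) i2 ` fst (Fo (Sc B)) \<subseteq> fst (Fo (Sc C))" using FC by blast
  have d: "Fm (Sc A) (Sc C) i1 ` fst (Fo (Sc A)) \<inter> Fm (Sc B) (Sc C) i2 ` fst (Fo (Sc B)) = {}"
    using Fcop unfolding is_coproduct_def by blast
  show "hat A \<inter> hat B = {}"
    unfolding hA hB using inj_on_image_Int[OF injPhi s1 s2] d by simp
qed

lemma hat_kernel:
  assumes Y': "is_gset G TG Y'" and pg: "gmap G X Y' pr"
  shows "hat {p \<in> fst X \<times> fst X. pr (fst p) = pr (snd p)} =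
         {q \<in> fst (Fo X) \<times> fst (Fo X). Fm X Y' pr (fst q) = Fm X Y' pr (snd q)}"
proof -
  define Kn where "Kn = {p \<in> fst X \<times> fst X. pr (fst p) = pr (snd p)}"
  have Ki: "invs Kn" unfolding invs_def Kn_def
  proof (intro conjI ballI)
    fix g p assume g: "g \<in> carrier G" and p: "p \<in> {p \<in> fst X \<times> fst X. pr (fst p) = pr (snd p)}"
    obtain a b where ab: "p = (a, b)" "a \<in> fst X" "b \<in> fst X" "pr a = pr b" using p by auto
    have "pr (snd X g a) = pr (snd X g b)" using pg g ab unfolding gmap_def by simp
    then show "snd P0 g p \<in> {p \<in> fst X \<times> fst X. pr (fst p) = pr (snd p)}"
      using ab pre_closed[OF is_gset_pre[OF Xg] g] by (simp add: P0_act)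
  qed auto
  have g1: "gmap G P Y' (pr \<circ> pi1)" by (rule gmap_comp[OF pi1_gmap pg])
  have g2: "gmap G P Y' (pr \<circ> pi2)" by (rule gmap_comp[OF pi2_gmap pg])
  have "is_equalizer G P Y' (pr \<circ> pi1) (pr \<circ> pi2) (Sc Kn) (eS Kn)"
    unfolding is_equalizer_def
  proof (intro conjI)
    show "gmap G (Sc Kn) P (eS Kn)" by (rule eS_gmap[OF Ki])
    show "inj_on (eS Kn) (fst (Sc Kn))" by (rule eS_inj[OF Ki])
    have "eS Kn ` fst (Sc Kn) = encP ` Kn" by (rule eS_img[OF Ki])
    also have "\<dots> = {x \<in> fst P. (pr \<circ> pi1) x = (pr \<circ> pi2) x}"
    proof (intro equalityI subsetI)
      fix x assume "x \<in> encP ` Kn"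
      then obtain p where p: "p \<in> Kn" "x = encP p" by blast
      have pX: "p \<in> fst X \<times> fst X" and pe: "pr (fst p) = pr (snd p)" using p(1) unfolding Kn_def by auto
      have "x \<in> fst P" using p(2) pX P_fst by simp
      moreover have "(pr \<circ> pi1) x = (pr \<circ> pi2) x" using pe decP_encP[OF pX] p(2) unfolding pi1_def pi2_def by simp
      ultimately show "x \<in> {x \<in> fst P. (pr \<circ> pi1) x = (pr \<circ> pi2) x}" by blast
    next
      fix x assume x: "x \<in> {x \<in> fst P. (pr \<circ> pi1) x = (pr \<circ> pi2) x}"
      then have xP: "x \<in> fst P" and xe: "(pr \<circ> pi1) x = (pr \<circ> pi2) x" by auto
      have "decP x \<in> Kn" using decP_in[OF xP] xe unfolding Kn_def pi1_def pi2_def by simp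
      then show "x \<in> encP ` Kn" using encP_decP[OF xP] by (metis image_eqI)
    qed
    finally show "eS Kn ` fst (Sc Kn) = {x \<in> fst P. (pr \<circ> pi1) x = (pr \<circ> pi2) x}" .
  qed
  then have "is_equalizer K (Fo P) (Fo Y') (Fm P Y' (pr \<circ> pi1)) (Fm P Y' (pr \<circ> pi2)) (Fo (Sc Kn)) (Fm (Sc Kn) P (eS Kn))"
    by (rule F_eq[OF P_gset Y' Sc_gset[OF Ki] g1 g2])
  then have E: "Fm (Sc Kn) P (eS Kn) ` fst (Fo (Sc Kn)) =
     {z \<in> fst (Fo P). Fm P Y' (pr \<circ> pi1) z = Fm P Y' (pr \<circ> pi2) z}"
    unfolding is_equalizer_def by blast
  have E2: "{z \<in> fst (Fo P). Fm P Y' (pr \<circ> pi1) z = Fm P Y' (pr \<circ> pi2) z} =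
     {z \<in> fst (Fo P). Fm X Y' pr (fst (beta z)) = Fm X Y' pr (snd (beta z))}"
    unfolding beta_def using F_comp[OF P_gset Xg Y' pi1_gmap pg] F_comp[OF P_gset Xg Y' pi2_gmap pg] by auto
  have "hat Kn = beta ` {z \<in> fst (Fo P). Fm X Y' pr (fst (beta z)) = Fm X Y' pr (snd (beta z))}"
    unfolding hat_def E E2 ..
  also have "\<dots> = {q \<in> fst (Fo X) \<times> fst (Fo X). Fm X Y' pr (fst q) = Fm X Y' pr (snd q)}"
    by (rule bij_image_filter[OF beta_bij, where Q="\<lambda>q. Fm X Y' pr (fst q) = Fm X Y' pr (snd q)"])
  finally show ?thesis unfolding Kn_def .
qed

lemma hat_diag: "hat {p \<in> fst X \<times> fst X. fst p = snd p} = {q \<in> fst (Fo X) \<times> fst (Fo X). fst q = snd q}"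
proof -
  have gid: "gmap G X X id" unfolding gmap_def using pre_closed[OF is_gset_pre[OF Xg]] by auto
  have "hat {p \<in> fst X \<times> fst X. id (fst p) = id (snd p)} =
         {q \<in> fst (Fo X) \<times> fst (Fo X). Fm X X id (fst q) = Fm X X id (snd q)}"
    by (rule hat_kernel[OF Xg gid])
  then show ?thesis using F_id[OF Xg] by auto
qed

end

context exf begin

definition orb where "orb p = orbit G P0 p"

lemma preP0: "pre_gset G TG P0" using is_gset_pre[OF P0_gset] .

lemma orb_sub: "p \<in> fst X \<times> fst X \<Longrightarrow> orb p \<subseteq> fst X \<times> fst X"
  unfolding orb_def using orbit_subset[OF preP0, of p] P0_fst by simp
lemma orb_self: "p \<in> fst X \<times> fst X \<Longrightarrow> p \<in> orb p"
  unfolding orb_def using orbit_self[OF grp preP0, of p] P0_fst by simp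
lemma orb_eq: "p \<in> fst X \<times> fst X \<Longrightarrow> q \<in> orb p \<Longrightarrow> orb q = orb p"
  unfolding orb_def using orbit_eq_mem[OF grp preP0, of p q] P0_fst by simp
lemma orb_act: "g \<in> carrier G \<Longrightarrow> p \<in> fst X \<times> fst X \<Longrightarrow> orb (snd P0 g p) = orb p"
  unfolding orb_def using orbit_act[OF grp preP0, of g p] P0_fst by simp

lemma orb_invs: assumes p: "p \<in> fst X \<times> fst X" shows "invs (orb p)"
  unfolding invs_def
proof (intro conjI ballI)
  show "orb p \<subseteq> fst X \<times> fst X" by (rule orb_sub[OF p])
next
  fix g q assume g: "g \<in> carrier G" and q: "q \<in> orb p"
  have qX: "q \<in> fst X \<times> fst X" using q orb_sub[OF p] by blast
  have "snd P0 g q \<in> orb q" unfolding orb_def using orbit_mem[OF preP0, of q g] qX g P0_fst by simp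
  then show "snd P0 g q \<in> orb p" using orb_eq[OF p q] by simp
qed

lemma orb_in: assumes S: "invs S" and p: "p \<in> S" shows "orb p \<subseteq> S"
proof
  fix q assume "q \<in> orb p"
  then obtain g where "g \<in> carrier G" "q = snd P0 g p" unfolding orb_def orbit_def by blast
  then show "q \<in> S" using invs_act[OF S _ p] by simp
qed

lemma orb_disj:
  assumes p: "p \<in> fst X \<times> fst X" and q: "q \<in> fst X \<times> fst X" and ne: "orb p \<noteq> orb q"
  shows "orb p \<inter> orb q = {}"
proof (rule ccontr)
  assume "orb p \<inter> orb q \<noteq> {}"
  then obtain r where r: "r \<in> orb p" "r \<in> orb q" by blast
  have "orb r = orb p" by (rule orb_eq[OF p r(1)])
  moreover have "orb r = orb q" by (rule orb_eq[OF q r(2)])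
  ultimately show False using ne by simp
qed

lemma orbs_finite: "finite (orb ` (fst X \<times> fst X))"
  using is_gset_fin[OF P0_gset] P0_fst unfolding orb_def by simp

lemma invs_Union: "(\<And>A. A \<in> F \<Longrightarrow> invs A) \<Longrightarrow> invs (\<Union>F)"
  unfolding invs_def by blast

lemma hat_Union_orbits:
  assumes "finite F" shows "F \<subseteq> orb ` (fst X \<times> fst X) \<Longrightarrow> hat (\<Union>F) \<subseteq> \<Union>(hat ` F)"
  using assms
proof (induction F rule: finite_induct)
  case empty
  then show ?case using hat_empty by simp
next
  case (insert Ob F)
  obtain p where p: "p \<in> fst X \<times> fst X" "Ob = orb p" using insert.prems by blast
  have Fsub: "F \<subseteq> orb ` (fst X \<times> fst X)" using insert.prems by blast
  have iO: "invs Ob" using orb_invs[OF p(1)] p(2) by simp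
  have iF: "invs (\<Union>F)" using Fsub orb_invs by (intro invs_Union) blast
  have disj: "Ob \<inter> \<Union>F = {}"
  proof -
    have "Ob \<inter> B = {}" if B: "B \<in> F" for B
    proof -
      obtain q where q: "q \<in> fst X \<times> fst X" "B = orb q" using B Fsub by blast
      have "orb p \<noteq> orb q" using insert.hyps(2) B p(2) q(2) by metis
      then show ?thesis using orb_disj[OF p(1) q(1)] p(2) q(2) by simp
    qed
    then show ?thesis by blast
  qed
  have "hat (\<Union>(insert Ob F)) = hat (Ob \<union> \<Union>F)" by simp
  also have "\<dots> = hat Ob \<union> hat (\<Union>F)" by (rule hat_union(1)[OF iO iF disj])
  also have "\<dots> \<subseteq> hat Ob \<union> \<Union>(hat ` F)" using insert.IH[OF Fsub] by blast
  finally show ?case by simp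
qed

lemma hat_cover_orbits: assumes S: "invs S" shows "hat S \<subseteq> (\<Union>p\<in>S. hat (orb p))"
proof -
  have Ssub: "S \<subseteq> fst X \<times> fst X" using invs_sub[OF S] .
  have SU: "S = \<Union>(orb ` S)"
  proof
    show "S \<subseteq> \<Union>(orb ` S)" using orb_self Ssub by blast
    show "\<Union>(orb ` S) \<subseteq> S" using orb_in[OF S] by blast
  qed
  have sub: "orb ` S \<subseteq> orb ` (fst X \<times> fst X)" using Ssub by blast
  have fin: "finite (orb ` S)" using finite_subset[OF sub orbs_finite] .
  have "hat S = hat (\<Union>(orb ` S))" using SU by simp
  also have "\<dots> \<subseteq> \<Union>(hat ` (orb ` S))" by (rule hat_Union_orbits[OF fin sub])
  finally show ?thesis by (simp add: image_image)
qed

lemma hat_orbit_exists: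
  assumes q: "q \<in> fst (Fo X) \<times> fst (Fo X)"
  shows "\<exists>p\<in>fst X \<times> fst X. q \<in> hat (orb p)"
  using q hat_cover hat_cover_orbits[OF invs_full] by blast

lemma gam_act:
  assumes S: "invs S" and k: "k \<in> carrier K" and w: "w \<in> fst (Fo (Sc S))"
  shows "beta (Fm (Sc S) P (eS S) (snd (Fo (Sc S)) k w)) =
    (snd (Fo X) k (fst (beta (Fm (Sc S) P (eS S) w))), snd (Fo X) k (snd (beta (Fm (Sc S) P (eS S) w))))"
proof -
  have gF: "gmap K (Fo (Sc S)) (Fo P) (Fm (Sc S) P (eS S))"
    by (rule F_gmap[OF Sc_gset[OF S] P_gset eS_gmap[OF S]])
  have e1: "Fm (Sc S) P (eS S) (snd (Fo (Sc S)) k w) = snd (Fo P) k (Fm (Sc S) P (eS S) w)"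
    using gF k w unfolding gmap_def by blast
  have zP: "Fm (Sc S) P (eS S) w \<in> fst (Fo P)" using gF w unfolding gmap_def by blast
  have g1: "gmap K (Fo P) (Fo X) (Fm P X pi1)" by (rule F_gmap[OF P_gset Xg pi1_gmap])
  have g2: "gmap K (Fo P) (Fo X) (Fm P X pi2)" by (rule F_gmap[OF P_gset Xg pi2_gmap])
  show ?thesis unfolding beta_def e1 using g1 g2 k zP unfolding gmap_def by simp
qed

lemma hat_gam: "hat S = (\<lambda>w. beta (Fm (Sc S) P (eS S) w)) ` fst (Fo (Sc S))"
  unfolding hat_def by (simp add: image_image)

lemma Sc_orb_trans: assumes p: "p \<in> fst X \<times> fst X" shows "transitive_gset G (Sc (orb p))"
proof -
  have tr: "transitive_gset G (sub (orb p))"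
    unfolding transitive_gset_def sub_fst
  proof (intro conjI ballI)
    show "orb p \<noteq> {}" using orb_self[OF p] by blast
  next
    fix q q' assume q: "q \<in> orb p" and q': "q' \<in> orb p"
    obtain a where a: "a \<in> carrier G" "q = snd P0 a p" using q unfolding orb_def orbit_def by blast
    obtain b where b: "b \<in> carrier G" "q' = snd P0 b p" using q' unfolding orb_def orbit_def by blast
    have ia: "inv\<^bsub>G\<^esub> a \<in> carrier G" using grp a(1) by (simp add: group.inv_closed)
    have pP: "p \<in> fst P0" using p P0_fst by simp
    have qP: "q \<in> fst P0" using pre_closed[OF preP0 a(1) pP] a(2) by simp
    have c: "b \<otimes>\<^bsub>G\<^esub> inv\<^bsub>G\<^esub> a \<in> carrier G" using grp b(1) ia by (simp add: group.is_monoid monoid.m_closed)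
    have "snd P0 (b \<otimes>\<^bsub>G\<^esub> inv\<^bsub>G\<^esub> a) q = snd P0 b (snd P0 (inv\<^bsub>G\<^esub> a) q)"
      by (rule pre_mult[OF preP0 b(1) ia qP])
    also have "\<dots> = q'" using pre_inv[OF grp preP0 a(1) pP] a(2) b(2) by simp
    finally have "snd (sub (orb p)) (b \<otimes>\<^bsub>G\<^esub> inv\<^bsub>G\<^esub> a) q = q'" unfolding sub_def by simp
    then show "\<exists>g\<in>carrier G. snd (sub (orb p)) g q = q'" using c by blast
  qed
  show ?thesis unfolding Sc_def canon_def using transp_trans[OF sub_inj'[OF orb_invs[OF p]] tr] .
qed

end

lemma orbitE:
  assumes "y \<in> orbit G A x" and "\<And>g. g \<in> carrier G \<Longrightarrow> y = snd A g x \<Longrightarrow> Q"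
  shows Q
proof -
  have "y \<in> (\<lambda>g. snd A g x) ` carrier G" using assms(1) unfolding orbit_def .
  then show Q
  proof (rule imageE)
    fix g assume "y = snd A g x" "g \<in> carrier G"
    then show Q using assms(2) by simp
  qed
qed

lemma orbit_gset:
  assumes grp: "group G" and pre: "pre_gset G T A" and a: "a \<in> fst A"
  shows "is_gset G T (orbit G A a, snd A)" and "transitive_gset G (orbit G A a, snd A)"
proof -
  have sub: "orbit G A a \<subseteq> fst A" by (rule orbit_subset[OF pre a])
  have inv: "\<forall>g\<in>carrier G. \<forall>x\<in>orbit G A a. snd A g x \<in> orbit G A a"
  proof (intro ballI)
    fix g x assume g: "g \<in> carrier G" and x: "x \<in> orbit G A a"
    have "snd A g x \<in> orbit G A x" using orbit_mem[OF pre _ g] x sub by blast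
    then show "snd A g x \<in> orbit G A a" using orbit_eq_mem[OF grp pre a x] by simp
  qed
  have pr: "pre_gset G T (orbit G A a, snd A)" by (rule restr_pre[OF pre sub inv])
  have tr: "transitive_gset G (orbit G A a, snd A)"
    unfolding transitive_gset_def fst_conv snd_conv
  proof (intro conjI ballI)
    show "orbit G A a \<noteq> {}" using orbit_self[OF grp pre a] by blast
  next
    fix q q' assume q: "q \<in> orbit G A a" and q': "q' \<in> orbit G A a"
    obtain u where u: "u \<in> carrier G" "q = snd A u a" using q by (rule orbitE)
    obtain v where v: "v \<in> carrier G" "q' = snd A v a" using q' by (rule orbitE)
    have iu: "inv\<^bsub>G\<^esub> u \<in> carrier G" using grp u(1) by (simp add: group.inv_closed)
    have qA: "q \<in> fst A" using q sub by blast
    have c: "v \<otimes>\<^bsub>G\<^esub> inv\<^bsub>G\<^esub> u \<in> carrier G" using grp v(1) iu by (simp add: group.is_monoid monoid.m_closed)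
    have "snd A (v \<otimes>\<^bsub>G\<^esub> inv\<^bsub>G\<^esub> u) q = snd A v (snd A (inv\<^bsub>G\<^esub> u) q)"
      by (rule pre_mult[OF pre v(1) iu qA])
    also have "\<dots> = q'" using pre_inv[OF grp pre u(1) a] u(2) v(2) by simp
    finally show "\<exists>g\<in>carrier G. snd A g q = q'" using c by blast
  qed
  show "transitive_gset G (orbit G A a, snd A)" by (rule tr)
  show "is_gset G T (orbit G A a, snd A)" by (rule transitive_is_gset[OF grp pr tr])
qed

locale exf2 = exf +
  assumes nonempty: "\<And>A. is_gset G TG A \<Longrightarrow> transitive_gset G A \<Longrightarrow> fst (Fo A) \<noteq> {}"
begin

lemma orb_diag: assumes x: "x \<in> fst X" shows "orb (x, x) = {p \<in> fst X \<times> fst X. fst p = snd p}"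
proof
  show "orb (x, x) \<subseteq> {p \<in> fst X \<times> fst X. fst p = snd p}"
  proof
    fix p assume p: "p \<in> orb (x, x)"
    obtain g where g: "g \<in> carrier G" "p = snd P0 g (x, x)"
      using p unfolding orb_def by (rule orbitE)
    have gx: "snd X g x \<in> fst X" by (rule pre_closed[OF is_gset_pre[OF Xg] g(1) x])
    have "p = (snd X g x, snd X g x)" using g(2) by (simp add: P0_act)
    then show "p \<in> {p \<in> fst X \<times> fst X. fst p = snd p}" using gx by simp
  qed
next
  show "{p \<in> fst X \<times> fst X. fst p = snd p} \<subseteq> orb (x, x)"
  proof
    fix p assume p: "p \<in> {p \<in> fst X \<times> fst X. fst p = snd p}"
    then have pz: "p = (fst p, fst p)" and pX: "fst p \<in> fst X" by (simp_all add: prod_eq_iff mem_Times_iff)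
    obtain z where z: "z \<in> fst X" "p = (z, z)" using pz pX by blast
    obtain g where g: "g \<in> carrier G" "snd X g x = z" using Xt x z(1) unfolding transitive_gset_def by blast
    have "p = snd P0 g (x, x)" using g z by (simp add: P0_act)
    then show "p \<in> orb (x, x)" unfolding orb_def orbit_def by (rule image_eqI[OF _ g(1)])
  qed
qed

lemma diag_in_hat: assumes x: "x \<in> fst X" and a: "a \<in> fst (Fo X)" shows "(a, a) \<in> hat (orb (x, x))"
  using hat_diag orb_diag[OF x] a by simp

lemma swap_hat:
  assumes x: "x \<in> fst X" and x': "x' \<in> fst X" and aa: "(a, a') \<in> hat (orb (x, x'))"
  shows "(a', a) \<in> hat (orb (x', x))"
proof -
  have p: "(x, x') \<in> fst X \<times> fst X" using x x' by simp
  have p': "(x', x) \<in> fst X \<times> fst X" using x x' by simp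
  define O1 where "O1 = orb (x, x')"
  have I1: "invs O1" unfolding O1_def by (rule orb_invs[OF p])
  obtain w where w: "w \<in> fst (Fo (Sc O1))" "(a, a') = beta (Fm (Sc O1) P (eS O1) w)"
    using aa unfolding hat_def O1_def by blast
  have g1: "gmap G (Sc O1) X (pi2 \<circ> eS O1)" by (rule gmap_comp[OF eS_gmap[OF I1] pi2_gmap])
  have g2: "gmap G (Sc O1) X (pi1 \<circ> eS O1)" by (rule gmap_comp[OF eS_gmap[OF I1] pi1_gmap])
  have "(Fm (Sc O1) X (pi2 \<circ> eS O1) w, Fm (Sc O1) X (pi1 \<circ> eS O1) w) \<in> hat (orb (x', x))"
  proof (rule factor[OF Sc_gset[OF I1] g1 g2 orb_invs[OF p'] _ w(1)])
    fix t assume "t \<in> fst (Sc O1)"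
    then have "decP (eS O1 t) \<in> O1" by (rule decP_eS[OF I1])
    then obtain g where g: "g \<in> carrier G" "decP (eS O1 t) = snd P0 g (x, x')"
      unfolding O1_def orb_def by (rule orbitE)
    have "((pi2 \<circ> eS O1) t, (pi1 \<circ> eS O1) t) = snd P0 g (x', x)"
      using g(2) unfolding pi1_def pi2_def by (simp add: P0_act)
    then show "((pi2 \<circ> eS O1) t, (pi1 \<circ> eS O1) t) \<in> orb (x', x)"
      unfolding orb_def orbit_def using g(1) by simp
  qed
  moreover have "Fm (Sc O1) X (pi2 \<circ> eS O1) w = Fm P X pi2 (Fm (Sc O1) P (eS O1) w)"
    by (rule F_comp[OF Sc_gset[OF I1] P_gset Xg eS_gmap[OF I1] pi2_gmap w(1)])
  moreover have "Fm (Sc O1) X (pi1 \<circ> eS O1) w = Fm P X pi1 (Fm (Sc O1) P (eS O1) w)"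
    by (rule F_comp[OF Sc_gset[OF I1] P_gset Xg eS_gmap[OF I1] pi1_gmap w(1)])
  ultimately show ?thesis using w(2) unfolding beta_def by simp
qed

lemma triple_hat:
  assumes x: "x \<in> fst X" and x': "x' \<in> fst X" and x'': "x'' \<in> fst X"
  shows "\<exists>a a' a''. (a, a') \<in> hat (orb (x, x')) \<and> (a', a'') \<in> hat (orb (x', x'')) \<and> (a, a'') \<in> hat (orb (x, x''))"
proof -
  define T3 where "T3 = diag_prod X P0"
  have preT3: "pre_gset G TG T3" unfolding T3_def by (rule diag_pre[OF is_gset_pre[OF Xg] preP0])
  define t0 where "t0 = (x, (x', x''))"
  have t0: "t0 \<in> fst T3" unfolding T3_def t0_def using x x' x'' by (simp add: diag_fst P0_fst)
  define T0 where "T0 = (orbit G T3 t0, snd T3)"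
  have T0g: "is_gset G TG T0" unfolding T0_def by (rule orbit_gset(1)[OF grp preT3 t0])
  have T0t: "transitive_gset G T0" unfolding T0_def by (rule orbit_gset(2)[OF grp preT3 t0])
  have injT: "inj_on (cenc G T0) (fst T0)" by (rule cenc_inj[OF grp T0g])
  define T where "T = canon G T0"
  have Tg: "is_gset G TG T" unfolding T_def canon_def by (rule transp_gset[OF injT T0g])
  have Tt: "transitive_gset G T" unfolding T_def canon_def by (rule transp_trans[OF injT T0t])
  have dg: "gmap G T T0 (dec G T0)" unfolding T_def canon_def dec_def
    by (rule transp_gmap_inv[OF injT is_gset_pre[OF T0g]])
  have decin: "\<exists>g\<in>carrier G. dec G T0 t = (snd X g x, (snd X g x', snd X g x''))" if t: "t \<in> fst T" for t
  proof -
    have "dec G T0 t \<in> fst T0" using dg t unfolding gmap_def by blast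
    then have "dec G T0 t \<in> orbit G T3 t0" unfolding T0_def by simp
    then obtain g where "g \<in> carrier G" "dec G T0 t = snd T3 g t0" by (rule orbitE)
    then show ?thesis unfolding T3_def t0_def by (auto simp: diag_act P0_act)
  qed
  have T0sub: "fst T0 \<subseteq> fst X \<times> fst X \<times> fst X"
    unfolding T0_def using orbit_subset[OF preT3 t0] unfolding T3_def by (simp add: diag_fst P0_fst)
  have T0act: "snd T0 g (a, b, c) = (snd X g a, snd X g b, snd X g c)" for g a b c
    unfolding T0_def T3_def by (simp add: diag_act P0_act)
  have gp1: "gmap G T0 X (\<lambda>p. fst p)" unfolding gmap_def using T0sub T0act by auto
  have gp2: "gmap G T0 X (\<lambda>p. fst (snd p))" unfolding gmap_def using T0sub T0act by auto
  have gp3: "gmap G T0 X (\<lambda>p. snd (snd p))" unfolding gmap_def using T0sub T0act by auto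
  define u1 where "u1 = (\<lambda>p. fst p) \<circ> dec G T0"
  define u2 where "u2 = (\<lambda>p. fst (snd p)) \<circ> dec G T0"
  define u3 where "u3 = (\<lambda>p. snd (snd p)) \<circ> dec G T0"
  have g1: "gmap G T X u1" unfolding u1_def by (rule gmap_comp[OF dg gp1])
  have g2: "gmap G T X u2" unfolding u2_def by (rule gmap_comp[OF dg gp2])
  have g3: "gmap G T X u3" unfolding u3_def by (rule gmap_comp[OF dg gp3])
  obtain z where z: "z \<in> fst (Fo T)" using nonempty[OF Tg Tt] by blast
  have inorb: "(snd X g y, snd X g y') \<in> orb (y, y')" if "g \<in> carrier G" for g y y'
    unfolding orb_def orbit_def using that by (auto simp: P0_act)
  have pX: "(y, y') \<in> fst X \<times> fst X" if "y \<in> fst X" "y' \<in> fst X" for y y' using that by simp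
  have h12: "(Fm T X u1 z, Fm T X u2 z) \<in> hat (orb (x, x'))"
  proof (rule factor[OF Tg g1 g2 orb_invs[OF pX[OF x x']] _ z])
    fix t assume "t \<in> fst T"
    then obtain g where "g \<in> carrier G" "dec G T0 t = (snd X g x, (snd X g x', snd X g x''))" using decin by blast
    then show "(u1 t, u2 t) \<in> orb (x, x')" unfolding u1_def u2_def using inorb by simp
  qed
  have h23: "(Fm T X u2 z, Fm T X u3 z) \<in> hat (orb (x', x''))"
  proof (rule factor[OF Tg g2 g3 orb_invs[OF pX[OF x' x'']] _ z])
    fix t assume "t \<in> fst T"
    then obtain g where "g \<in> carrier G" "dec G T0 t = (snd X g x, (snd X g x', snd X g x''))" using decin by blast
    then show "(u2 t, u3 t) \<in> orb (x', x'')" unfolding u2_def u3_def using inorb by simp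
  qed
  have h13: "(Fm T X u1 z, Fm T X u3 z) \<in> hat (orb (x, x''))"
  proof (rule factor[OF Tg g1 g3 orb_invs[OF pX[OF x x'']] _ z])
    fix t assume "t \<in> fst T"
    then obtain g where "g \<in> carrier G" "dec G T0 t = (snd X g x, (snd X g x', snd X g x''))" using decin by blast
    then show "(u1 t, u3 t) \<in> orb (x, x'')" unfolding u1_def u3_def using inorb by simp
  qed
  show ?thesis using h12 h23 h13 by blast
qed

end

locale mainL =
  fixes G :: "'g monoid" and TG :: "'g topology"
    and H :: "'h monoid" and TH :: "'h topology"
    and K :: "'k monoid" and TK :: "'k topology"
    and PhiO :: "(nat \<times> 'g set, 'g) gset \<Rightarrow> (nat \<times> 'k set, 'k) gset"
    and PhiM :: "(nat \<times> 'g set, 'g) gset \<Rightarrow> (nat \<times> 'g set, 'g) gset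
                  \<Rightarrow> (nat \<times> 'g set \<Rightarrow> nat \<times> 'g set) \<Rightarrow> (nat \<times> 'k set \<Rightarrow> nat \<times> 'k set)"
    and PsiO :: "(nat \<times> 'h set, 'h) gset \<Rightarrow> (nat \<times> 'k set, 'k) gset"
    and PsiM :: "(nat \<times> 'h set, 'h) gset \<Rightarrow> (nat \<times> 'h set, 'h) gset
                  \<Rightarrow> (nat \<times> 'h set \<Rightarrow> nat \<times> 'h set) \<Rightarrow> (nat \<times> 'k set \<Rightarrow> nat \<times> 'k set)"
    and X :: "(nat \<times> 'g set, 'g) gset"
    and Y :: "(nat \<times> 'h set, 'h) gset"
    and Z :: "('z, 'k) gset"
    and q :: "(nat \<times> 'k set) \<times> (nat \<times> 'k set) \<Rightarrow> 'z"
  assumes proG: "pro_oligomorphic G TG" and proH: "pro_oligomorphic H TH" and proK: "pro_oligomorphic K TK"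
    and splitH: "split_wrt G TG TYPE('h)"
    and exP: "exact_functor G TG K TK PhiO PhiM"
    and exS: "exact_functor H TH K TK PsiO PsiM"
    and hyp: "\<And>X' Y'. is_gset G TG X' \<Longrightarrow> transitive_gset G X' \<Longrightarrow> is_gset H TH Y' \<Longrightarrow> transitive_gset H Y'
            \<Longrightarrow> transitive_gset K (diag_prod (PhiO X') (PsiO Y'))"
    and Xg: "is_gset G TG X" and Xt: "transitive_gset G X"
    and Yg: "is_gset H TH Y" and Yt: "transitive_gset H Y"
    and Zg: "is_gset K TK Z"
    and qg: "gmap K (diag_prod (PhiO X) (PsiO Y)) Z q"
    and qs: "q ` fst (diag_prod (PhiO X) (PsiO Y)) = fst Z"

sublocale mainL \<subseteq> A: exf2 G TG K TK PhiO PhiM X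
proof -
  have e: "exf G TG K TK PhiO PhiM X" by (rule exf.intro[OF proG exP Xg Xt])
  have n: "fst (PhiO A) \<noteq> {}" if "is_gset G TG A" "transitive_gset G A" for A
  proof -
    have "fst (diag_prod (PhiO A) (PsiO Y)) \<noteq> {}" using hyp[OF that Yg Yt] unfolding transitive_gset_def by blast
    then show ?thesis by (simp add: diag_fst)
  qed
  show "exf2 G TG K TK PhiO PhiM X" by (rule exf2.intro[OF e exf2_axioms.intro[OF n]])
qed

sublocale mainL \<subseteq> B: exf2 H TH K TK PsiO PsiM Y
proof -
  have e: "exf H TH K TK PsiO PsiM Y" by (rule exf.intro[OF proH exS Yg Yt])
  have n: "fst (PsiO A) \<noteq> {}" if "is_gset H TH A" "transitive_gset H A" for A
  proof -
    have "fst (diag_prod (PhiO X) (PsiO A)) \<noteq> {}" using hyp[OF Xg Xt that] unfolding transitive_gset_def by blast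
    then show ?thesis by (simp add: diag_fst)
  qed
  show "exf2 H TH K TK PsiO PsiM Y" by (rule exf2.intro[OF e exf2_axioms.intro[OF n]])
qed

context mainL begin

abbreviation "W \<equiv> diag_prod (PhiO X) (PsiO Y)"

lemma grpG: "group G" using proG by (rule pro_group)
lemma grpH: "group H" using proH by (rule pro_group)
lemma grpK: "group K" using proK by (rule pro_group)

lemma q_act: assumes k: "k \<in> carrier K" and a: "a \<in> fst (PhiO X)" and b: "b \<in> fst (PsiO Y)"
  shows "q (snd (PhiO X) k a, snd (PsiO Y) k b) = snd Z k (q (a, b))"
proof -
  have "(a, b) \<in> fst W" using a b by (simp add: diag_fst)
  then have "q (snd W k (a, b)) = snd Z k (q (a, b))" using qg k unfolding gmap_def by blast
  then show ?thesis by (simp add: diag_act)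
qed

lemma all:
  assumes x: "x \<in> fst X" and x': "x' \<in> fst X" and y: "y \<in> fst Y" and y': "y' \<in> fst Y"
    and aa: "(a, a') \<in> A.hat (A.orb (x, x'))" and bb: "(b, b') \<in> B.hat (B.orb (y, y'))"
    and cc: "(c, c') \<in> A.hat (A.orb (x, x'))" and dd: "(d, d') \<in> B.hat (B.orb (y, y'))"
    and eq: "q (a, b) = q (a', b')"
  shows "q (c, d) = q (c', d')"
proof -
  define O1 where "O1 = A.orb (x, x')"
  define Q1 where "Q1 = B.orb (y, y')"
  have pX: "(x, x') \<in> fst X \<times> fst X" using x x' by simp
  have pY: "(y, y') \<in> fst Y \<times> fst Y" using y y' by simp
  have IO: "A.invs O1" unfolding O1_def by (rule A.orb_invs[OF pX])
  have IQ: "B.invs Q1" unfolding Q1_def by (rule B.orb_invs[OF pY])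
  obtain w1 where w1: "w1 \<in> fst (PhiO (A.Sc O1))" "(a, a') = A.beta (PhiM (A.Sc O1) A.P (A.eS O1) w1)"
    using aa unfolding O1_def[symmetric] A.hat_gam by blast
  obtain w2 where w2: "w2 \<in> fst (PhiO (A.Sc O1))" "(c, c') = A.beta (PhiM (A.Sc O1) A.P (A.eS O1) w2)"
    using cc unfolding O1_def[symmetric] A.hat_gam by blast
  obtain v1 where v1: "v1 \<in> fst (PsiO (B.Sc Q1))" "(b, b') = B.beta (PsiM (B.Sc Q1) B.P (B.eS Q1) v1)"
    using bb unfolding Q1_def[symmetric] B.hat_gam by blast
  obtain v2 where v2: "v2 \<in> fst (PsiO (B.Sc Q1))" "(d, d') = B.beta (PsiM (B.Sc Q1) B.P (B.eS Q1) v2)"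
    using dd unfolding Q1_def[symmetric] B.hat_gam by blast
  have tr: "transitive_gset K (diag_prod (PhiO (A.Sc O1)) (PsiO (B.Sc Q1)))"
    using hyp[OF A.Sc_gset[OF IO] A.Sc_orb_trans[OF pX, folded O1_def] B.Sc_gset[OF IQ] B.Sc_orb_trans[OF pY, folded Q1_def]] .
  have "(w1, v1) \<in> fst (diag_prod (PhiO (A.Sc O1)) (PsiO (B.Sc Q1)))" using w1 v1 by (simp add: diag_fst)
  moreover have "(w2, v2) \<in> fst (diag_prod (PhiO (A.Sc O1)) (PsiO (B.Sc Q1)))" using w2 v2 by (simp add: diag_fst)
  ultimately obtain k where k: "k \<in> carrier K"
    "snd (diag_prod (PhiO (A.Sc O1)) (PsiO (B.Sc Q1))) k (w1, v1) = (w2, v2)"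
    using tr unfolding transitive_gset_def by blast
  have kw: "snd (PhiO (A.Sc O1)) k w1 = w2" and kv: "snd (PsiO (B.Sc Q1)) k v1 = v2"
    using k(2) by (simp_all add: diag_act)
  have c: "(c, c') = (snd (PhiO X) k a, snd (PhiO X) k a')"
    using A.gam_act[OF IO k(1) w1(1)] w1(2)[symmetric] w2(2) kw by simp
  have d: "(d, d') = (snd (PsiO Y) k b, snd (PsiO Y) k b')"
    using B.gam_act[OF IQ k(1) v1(1)] v1(2)[symmetric] v2(2) kv by simp
  have aX: "a \<in> fst (PhiO X)" "a' \<in> fst (PhiO X)" using aa A.hat_into[OF A.orb_invs[OF pX]] by auto
  have bY: "b \<in> fst (PsiO Y)" "b' \<in> fst (PsiO Y)" using bb B.hat_into[OF B.orb_invs[OF pY]] by auto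
  have "q (c, d) = snd Z k (q (a, b))" using c d q_act[OF k(1) aX(1) bY(1)] by simp
  also have "\<dots> = snd Z k (q (a', b'))" using eq by simp
  also have "\<dots> = q (c', d')" using c d q_act[OF k(1) aX(2) bY(2)] by simp
  finally show ?thesis .
qed

definition E :: "nat \<times> 'g set \<Rightarrow> nat \<times> 'h set \<Rightarrow> nat \<times> 'g set \<Rightarrow> nat \<times> 'h set \<Rightarrow> bool" where
  "E x y x' y' \<longleftrightarrow> x \<in> fst X \<and> y \<in> fst Y \<and> x' \<in> fst X \<and> y' \<in> fst Y \<and>
     (\<exists>a a' b b'. (a, a') \<in> A.hat (A.orb (x, x')) \<and> (b, b') \<in> B.hat (B.orb (y, y')) \<and> q (a, b) = q (a', b'))"

lemma E_all:
  assumes "E x y x' y'" and cc: "(c, c') \<in> A.hat (A.orb (x, x'))" and dd: "(d, d') \<in> B.hat (B.orb (y, y'))"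
  shows "q (c, d) = q (c', d')"
proof -
  obtain a a' b b' where w: "(a, a') \<in> A.hat (A.orb (x, x'))" "(b, b') \<in> B.hat (B.orb (y, y'))" "q (a, b) = q (a', b')"
    and m: "x \<in> fst X" "y \<in> fst Y" "x' \<in> fst X" "y' \<in> fst Y"
    using assms(1) unfolding E_def by blast
  show ?thesis by (rule all[OF m(1) m(3) m(2) m(4) w(1) w(2) cc dd w(3)])
qed

lemma nonemptyX: "fst (PhiO X) \<noteq> {}" using A.nonempty[OF Xg Xt] .
lemma nonemptyY: "fst (PsiO Y) \<noteq> {}" using B.nonempty[OF Yg Yt] .

lemma E_refl: assumes x: "x \<in> fst X" and y: "y \<in> fst Y" shows "E x y x y"
proof -
  obtain a where a: "a \<in> fst (PhiO X)" using nonemptyX by blast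
  obtain b where b: "b \<in> fst (PsiO Y)" using nonemptyY by blast
  show ?thesis unfolding E_def using x y A.diag_in_hat[OF x a] B.diag_in_hat[OF y b] by blast
qed

lemma E_sym: assumes "E x y x' y'" shows "E x' y' x y"
proof -
  obtain a a' b b' where w: "(a, a') \<in> A.hat (A.orb (x, x'))" "(b, b') \<in> B.hat (B.orb (y, y'))" "q (a, b) = q (a', b')"
    and m: "x \<in> fst X" "y \<in> fst Y" "x' \<in> fst X" "y' \<in> fst Y"
    using assms(1) unfolding E_def by blast
  have "(a', a) \<in> A.hat (A.orb (x', x))" by (rule A.swap_hat[OF m(1) m(3) w(1)])
  moreover have "(b', b) \<in> B.hat (B.orb (y', y))" by (rule B.swap_hat[OF m(2) m(4) w(2)])
  ultimately show ?thesis unfolding E_def using m w(3) by metis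
qed

lemma E_trans: assumes e1: "E x y x' y'" and e2: "E x' y' x'' y''" shows "E x y x'' y''"
proof -
  have m: "x \<in> fst X" "y \<in> fst Y" "x' \<in> fst X" "y' \<in> fst Y" "x'' \<in> fst X" "y'' \<in> fst Y"
    using e1 e2 unfolding E_def by blast+
  obtain a a' a'' where a: "(a, a') \<in> A.hat (A.orb (x, x'))" "(a', a'') \<in> A.hat (A.orb (x', x''))"
      "(a, a'') \<in> A.hat (A.orb (x, x''))"
    using A.triple_hat[OF m(1) m(3) m(5)] by blast
  obtain b b' b'' where b: "(b, b') \<in> B.hat (B.orb (y, y'))" "(b', b'') \<in> B.hat (B.orb (y', y''))"
      "(b, b'') \<in> B.hat (B.orb (y, y''))"
    using B.triple_hat[OF m(2) m(4) m(6)] by blast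
  have "q (a, b) = q (a', b')" by (rule E_all[OF e1 a(1) b(1)])
  also have "\<dots> = q (a'', b'')" by (rule E_all[OF e2 a(2) b(2)])
  finally show ?thesis unfolding E_def using m a(3) b(3) by blast
qed

lemma E_inv:
  assumes e: "E x y x' y'" and g: "g \<in> carrier G" and h: "h \<in> carrier H"
  shows "E (snd X g x) (snd Y h y) (snd X g x') (snd Y h y')"
proof -
  have m: "x \<in> fst X" "y \<in> fst Y" "x' \<in> fst X" "y' \<in> fst Y" using e unfolding E_def by blast+
  have o1: "A.orb (snd X g x, snd X g x') = A.orb (x, x')"
    using A.orb_act[OF g, of "(x, x')"] m by (simp add: A.P0_act)
  have o2: "B.orb (snd Y h y, snd Y h y') = B.orb (y, y')"
    using B.orb_act[OF h, of "(y, y')"] m by (simp add: B.P0_act)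
  have c: "snd X g x \<in> fst X" "snd X g x' \<in> fst X"
    using pre_closed[OF is_gset_pre[OF Xg] g] m by blast+
  have d: "snd Y h y \<in> fst Y" "snd Y h y' \<in> fst Y"
    using pre_closed[OF is_gset_pre[OF Yg] h] m by blast+
  show ?thesis using e c d o1 o2 unfolding E_def by simp
qed

end

lemma quotient_package:
  assumes pro: "pro_oligomorphic G T" and A: "is_gset G T A" and At: "transitive_gset G A"
    and eq: "equiv (fst A) R" and ri: "rinv G A R"
  shows "is_gset G T (canon G (quo A R))"
    and "transitive_gset G (canon G (quo A R))"
    and "gmap G A (canon G (quo A R)) (\<lambda>x. cenc G (quo A R) (R `` {x}))"
    and "(\<lambda>x. cenc G (quo A R) (R `` {x})) ` fst A = fst (canon G (quo A R))"
    and "x \<in> fst A \<Longrightarrow> x' \<in> fst A \<Longrightarrow>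
           cenc G (quo A R) (R `` {x}) = cenc G (quo A R) (R `` {x'}) \<longleftrightarrow> (x, x') \<in> R"
proof -
  have grp: "group G" using pro by (rule pro_group)
  have pre: "pre_gset G T A" using A by (rule is_gset_pre)
  have co: "coset_open G T A" by (rule topgroup_coset_open[OF pro_topgroup[OF pro] pre])
  have Qg: "is_gset G T (quo A R)" by (rule quo_gset[OF grp pre eq ri co At])
  have Qt: "transitive_gset G (quo A R)" by (rule quo_trans[OF grp pre eq ri At])
  have inj: "inj_on (cenc G (quo A R)) (fst (quo A R))" by (rule cenc_inj[OF grp Qg])
  show "is_gset G T (canon G (quo A R))" unfolding canon_def by (rule transp_gset[OF inj Qg])
  show "transitive_gset G (canon G (quo A R))" unfolding canon_def by (rule transp_trans[OF inj Qt])
  have g1: "gmap G A (quo A R) (\<lambda>x. R `` {x})" by (rule quo_gmap[OF grp pre eq ri])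
  have g2: "gmap G (quo A R) (canon G (quo A R)) (cenc G (quo A R))" unfolding canon_def by (rule transp_gmap[OF inj])
  show "gmap G A (canon G (quo A R)) (\<lambda>x. cenc G (quo A R) (R `` {x}))"
    using gmap_comp[OF g1 g2] by (simp add: o_def)
  show "(\<lambda>x. cenc G (quo A R) (R `` {x})) ` fst A = fst (canon G (quo A R))"
    unfolding canon_def transp_fst quo_surj[symmetric] by (simp add: image_image)
  assume x: "x \<in> fst A" and x': "x' \<in> fst A"
  have cx: "R `` {x} \<in> fst (quo A R)" "R `` {x'} \<in> fst (quo A R)"
    using x x' unfolding quo_fst by (auto intro: quotientI)
  have "cenc G (quo A R) (R `` {x}) = cenc G (quo A R) (R `` {x'}) \<longleftrightarrow> R `` {x} = R `` {x'}"
    using inj cx by (auto dest: inj_onD)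
  also have "\<dots> \<longleftrightarrow> (x, x') \<in> R" by (rule eq_equiv_class_iff[OF eq x x'])
  finally show "cenc G (quo A R) (R `` {x}) = cenc G (quo A R) (R `` {x'}) \<longleftrightarrow> (x, x') \<in> R" .
qed

context mainL begin

definition Et where "Et = {(p, p'). E (fst p) (snd p) (fst p') (snd p')}"

lemma Et_mem: "((x, y), (x', y')) \<in> Et \<longleftrightarrow> E x y x' y'" unfolding Et_def by simp

lemma E_mem: "E x y x' y' \<Longrightarrow> x \<in> fst X \<and> y \<in> fst Y \<and> x' \<in> fst X \<and> y' \<in> fst Y"
  unfolding E_def by blast

lemma Et_equiv: "equiv (fst X \<times> fst Y) Et"
proof (rule equivI)
  show "Et \<subseteq> (fst X \<times> fst Y) \<times> (fst X \<times> fst Y)" unfolding Et_def using E_mem by auto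
  show "refl_on (fst X \<times> fst Y) Et" by (rule refl_onI) (auto simp: Et_def intro: E_refl)
  show "sym Et" by (rule symI) (auto simp: Et_def intro: E_sym)
  show "trans Et" by (rule transI) (auto simp: Et_def intro: E_trans)
qed

abbreviation "GH \<equiv> G \<times>\<times> H"
abbreviation "TGH \<equiv> prod_topology TG TH"
abbreviation "XY \<equiv> ext_prod X Y"

lemma grpGH: "group GH" by (rule DirProd_group[OF grpG grpH])

lemma Et_rinv: "rinv GH XY Et"
  unfolding rinv_def
proof (intro ballI allI impI)
  fix k p p' assume k: "k \<in> carrier GH" and pp: "(p, p') \<in> Et"
  obtain g h where gh: "k = (g, h)" "g \<in> carrier G" "h \<in> carrier H" using k by auto
  obtain x y where p: "p = (x, y)" by (cases p)
  obtain x' y' where p': "p' = (x', y')" by (cases p')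
  have "E x y x' y'" using pp p p' by (simp add: Et_mem)
  then have "E (snd X g x) (snd Y h y) (snd X g x') (snd Y h y')" by (rule E_inv[OF _ gh(2,3)])
  then show "(snd XY k p, snd XY k p') \<in> Et" using gh(1) p p' by (simp add: ext_act Et_mem)
qed

lemma preXY: "pre_gset GH TGH XY" by (rule ext_pre[OF is_gset_pre[OF Xg] is_gset_pre[OF Yg]])

lemma coXY: "coset_open GH TGH XY"
  by (rule ext_coset_open[OF pro_topgroup[OF proG] pro_topgroup[OF proH] is_gset_pre[OF Xg] is_gset_pre[OF Yg]])

lemma trXY: "transitive_gset GH XY"
  unfolding transitive_gset_def ext_fst
proof (intro conjI ballI)
  show "fst X \<times> fst Y \<noteq> {}" using Xt Yt unfolding transitive_gset_def by simp
next
  fix p p' assume p: "p \<in> fst X \<times> fst Y" and p': "p' \<in> fst X \<times> fst Y"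
  obtain x y where xy: "p = (x, y)" "x \<in> fst X" "y \<in> fst Y" using p by auto
  obtain x' y' where xy': "p' = (x', y')" "x' \<in> fst X" "y' \<in> fst Y" using p' by auto
  obtain g where g: "g \<in> carrier G" "snd X g x = x'" using Xt xy xy' unfolding transitive_gset_def by blast
  obtain h where h: "h \<in> carrier H" "snd Y h y = y'" using Yt xy xy' unfolding transitive_gset_def by blast
  have "snd XY (g, h) p = p'" using xy xy' g h by (simp add: ext_act)
  moreover have "(g, h) \<in> carrier GH" using g h by simp
  ultimately show "\<exists>k\<in>carrier GH. snd XY k p = p'" by blast
qed

abbreviation "W0 \<equiv> quo XY Et"

lemma W0g: "is_gset GH TGH W0" by (rule quo_gset[OF grpGH preXY _ Et_rinv coXY trXY]) (simp add: ext_fst Et_equiv)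
lemma W0t: "transitive_gset GH W0" by (rule quo_trans[OF grpGH preXY _ Et_rinv trXY]) (simp add: ext_fst Et_equiv)

abbreviation "Wc \<equiv> canon GH W0"
lemma injW: "inj_on (cenc GH W0) (fst W0)" by (rule cenc_inj[OF grpGH W0g])
lemma Wcg: "is_gset GH TGH Wc" unfolding canon_def by (rule transp_gset[OF injW W0g])
lemma Wct: "transitive_gset GH Wc" unfolding canon_def by (rule transp_trans[OF injW W0t])

lemma split_exists:
  "\<exists>(X1 :: (nat \<times> 'g set, 'g) gset) (Y1 :: (nat \<times> 'h set, 'h) gset).
     is_gset G TG X1 \<and> transitive_gset G X1 \<and> is_gset H TH Y1 \<and> transitive_gset H Y1 \<and>
     gset_iso GH Wc (ext_prod X1 Y1)"
proof -
  have "\<forall>(H' :: 'h monoid) TH'. pro_oligomorphic H' TH' \<longrightarrow>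
       (\<forall>W :: (nat \<times> ('g \<times> 'h) set, 'g \<times> 'h) gset.
          is_gset (G \<times>\<times> H') (prod_topology TG TH') W \<and> transitive_gset (G \<times>\<times> H') W \<longrightarrow>
          (\<exists>(X :: (nat \<times> 'g set, 'g) gset) (Y :: (nat \<times> 'h set, 'h) gset).
             is_gset G TG X \<and> transitive_gset G X \<and>
             is_gset H' TH' Y \<and> transitive_gset H' Y \<and>
             gset_iso (G \<times>\<times> H') W (ext_prod X Y)))"
    using splitH unfolding split_wrt_def .
  then have "\<forall>W :: (nat \<times> ('g \<times> 'h) set, 'g \<times> 'h) gset.
          is_gset GH TGH W \<and> transitive_gset GH W \<longrightarrow>
          (\<exists>(X :: (nat \<times> 'g set, 'g) gset) (Y :: (nat \<times> 'h set, 'h) gset).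
             is_gset G TG X \<and> transitive_gset G X \<and>
             is_gset H TH Y \<and> transitive_gset H Y \<and>
             gset_iso GH W (ext_prod X Y))"
    using proH by blast
  then show ?thesis using Wcg Wct by blast
qed

end

context mainL begin

lemma E_proj:
  "\<exists>x0 y0 (R :: ((nat \<times> 'g set) \<times> (nat \<times> 'g set)) set) (S :: ((nat \<times> 'h set) \<times> (nat \<times> 'h set)) set).
     x0 \<in> fst X \<and> y0 \<in> fst Y \<and> R = {(x, x'). E x y0 x' y0} \<and> S = {(y, y'). E x0 y x0 y'} \<and>
     (\<forall>x y x' y'. E x y x' y' \<longrightarrow> E x y0 x' y0 \<and> E x0 y x0 y')"
proof -
  obtain X1 :: "(nat \<times> 'g set, 'g) gset" and Y1 :: "(nat \<times> 'h set, 'h) gset" where XY1: "is_gset G TG X1" "transitive_gset G X1" "is_gset H TH Y1" "transitive_gset H Y1"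
    "gset_iso GH Wc (ext_prod X1 Y1)" using split_exists by blast
  obtain phi where phi: "gmap GH Wc (ext_prod X1 Y1) phi" "bij_betw phi (fst Wc) (fst (ext_prod X1 Y1))"
    using XY1(5) unfolding gset_iso_def by blast
  have eqv: "equiv (fst XY) Et" using Et_equiv by (simp add: ext_fst)
  define f where "f p = phi (cenc GH W0 (Et `` {p}))" for p
  have clsW0: "Et `` {p} \<in> fst W0" if "p \<in> fst X \<times> fst Y" for p
    using that unfolding quo_fst ext_fst by (rule quotientI)
  have fin: "f p \<in> fst X1 \<times> fst Y1" if "p \<in> fst X \<times> fst Y" for p
  proof -
    have "cenc GH W0 (Et `` {p}) \<in> fst Wc" unfolding canon_def using clsW0[OF that] by simp
    then show ?thesis unfolding f_def using phi(2) unfolding bij_betw_def by (auto simp: ext_fst)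
  qed
  have feq: "f p = f p' \<longleftrightarrow> (p, p') \<in> Et" if p: "p \<in> fst X \<times> fst Y" and p': "p' \<in> fst X \<times> fst Y" for p p'
  proof -
    have c1: "cenc GH W0 (Et `` {p}) \<in> fst Wc" unfolding canon_def using clsW0[OF p] by simp
    have c2: "cenc GH W0 (Et `` {p'}) \<in> fst Wc" unfolding canon_def using clsW0[OF p'] by simp
    have "f p = f p' \<longleftrightarrow> cenc GH W0 (Et `` {p}) = cenc GH W0 (Et `` {p'})"
      unfolding f_def using phi(2) c1 c2 unfolding bij_betw_def by (auto dest: inj_onD)
    also have "\<dots> \<longleftrightarrow> Et `` {p} = Et `` {p'}" using injW clsW0[OF p] clsW0[OF p'] by (auto dest: inj_onD)
    also have "\<dots> \<longleftrightarrow> (p, p') \<in> Et" by (rule eq_equiv_class_iff[OF Et_equiv p p'])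
    finally show ?thesis .
  qed
  have fact: "f (snd X g x, snd Y h y) = (snd X1 g (fst (f (x, y))), snd Y1 h (snd (f (x, y))))"
    if g: "g \<in> carrier G" and h: "h \<in> carrier H" and x: "x \<in> fst X" and y: "y \<in> fst Y" for g h x y
  proof -
    have k: "(g, h) \<in> carrier GH" using g h by simp
    have p: "(x, y) \<in> fst XY" using x y by (simp add: ext_fst)
    have "Et `` {(snd X g x, snd Y h y)} = Et `` {snd XY (g, h) (x, y)}" by (simp add: ext_act)
    also have "\<dots> = snd XY (g, h) ` (Et `` {(x, y)})"
      by (rule quo_class_act[OF grpGH preXY eqv Et_rinv k p, symmetric])
    also have "\<dots> = snd W0 (g, h) (Et `` {(x, y)})" by (simp add: quo_act)
    finally have e1: "Et `` {(snd X g x, snd Y h y)} = snd W0 (g, h) (Et `` {(x, y)})" .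
    have cl: "Et `` {(x, y)} \<in> fst W0" using clsW0 x y by simp
    have "cenc GH W0 (snd W0 (g, h) (Et `` {(x, y)})) = snd Wc (g, h) (cenc GH W0 (Et `` {(x, y)}))"
      unfolding canon_def using transp_act[OF injW cl] by simp
    moreover have "cenc GH W0 (Et `` {(x, y)}) \<in> fst Wc" unfolding canon_def using cl by simp
    ultimately have "f (snd X g x, snd Y h y) = snd (ext_prod X1 Y1) (g, h) (f (x, y))"
      unfolding f_def e1 using phi(1) k unfolding gmap_def by simp
    then show ?thesis by (simp add: ext_prod_def split_beta)
  qed
  have one: "\<one>\<^bsub>G\<^esub> \<in> carrier G" using grpG by (simp add: group.is_monoid monoid.one_closed)
  have oneH: "\<one>\<^bsub>H\<^esub> \<in> carrier H" using grpH by (simp add: group.is_monoid monoid.one_closed)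
  have f1: "fst (f (x, y)) = fst (f (x, y'))" if x: "x \<in> fst X" and y: "y \<in> fst Y" and y': "y' \<in> fst Y" for x y y'
  proof -
    obtain h where h: "h \<in> carrier H" "snd Y h y = y'" using Yt y y' unfolding transitive_gset_def by blast
    have "f (x, y') = f (snd X \<one>\<^bsub>G\<^esub> x, snd Y h y)" using h pre_one[OF is_gset_pre[OF Xg] x] by simp
    also have "\<dots> = (snd X1 \<one>\<^bsub>G\<^esub> (fst (f (x, y))), snd Y1 h (snd (f (x, y))))" by (rule fact[OF one h(1) x y])
    finally have "fst (f (x, y')) = snd X1 \<one>\<^bsub>G\<^esub> (fst (f (x, y)))" by simp
    also have "\<dots> = fst (f (x, y))" using pre_one[OF is_gset_pre[OF XY1(1)]] fin[of "(x, y)"] x y by auto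
    finally show ?thesis by simp
  qed
  have f2: "snd (f (x, y)) = snd (f (x', y))" if x: "x \<in> fst X" and x': "x' \<in> fst X" and y: "y \<in> fst Y" for x x' y
  proof -
    obtain g where g: "g \<in> carrier G" "snd X g x = x'" using Xt x x' unfolding transitive_gset_def by blast
    have "f (x', y) = f (snd X g x, snd Y \<one>\<^bsub>H\<^esub> y)" using g pre_one[OF is_gset_pre[OF Yg] y] by simp
    also have "\<dots> = (snd X1 g (fst (f (x, y))), snd Y1 \<one>\<^bsub>H\<^esub> (snd (f (x, y))))" by (rule fact[OF g(1) oneH x y])
    finally have "snd (f (x', y)) = snd Y1 \<one>\<^bsub>H\<^esub> (snd (f (x, y)))" by simp
    also have "\<dots> = snd (f (x, y))" using pre_one[OF is_gset_pre[OF XY1(3)]] fin[of "(x, y)"] x y by auto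
    finally show ?thesis by simp
  qed
  obtain x0 where x0: "x0 \<in> fst X" using Xt unfolding transitive_gset_def by blast
  obtain y0 where y0: "y0 \<in> fst Y" using Yt unfolding transitive_gset_def by blast
  have key: "E x y0 x' y0 \<and> E x0 y x0 y'" if e: "E x y x' y'" for x y x' y'
  proof -
    have m: "x \<in> fst X" "y \<in> fst Y" "x' \<in> fst X" "y' \<in> fst Y" using E_mem[OF e] by auto
    have ff: "f (x, y) = f (x', y')" using feq[of "(x, y)" "(x', y')"] m e by (simp add: Et_mem)
    have "fst (f (x, y0)) = fst (f (x', y0))"
      using f1[OF m(1) m(2) y0] f1[OF m(3) m(4) y0] ff by simp
    moreover have "snd (f (x, y0)) = snd (f (x', y0))" using f2[OF m(1) m(3) y0] .
    ultimately have "f (x, y0) = f (x', y0)" by (simp add: prod_eq_iff)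
    then have a: "E x y0 x' y0" using feq[of "(x, y0)" "(x', y0)"] m y0 by (simp add: Et_mem)
    have "snd (f (x0, y)) = snd (f (x0, y'))"
      using f2[OF m(1) x0 m(2)] f2[OF m(3) x0 m(4)] ff by simp
    moreover have "fst (f (x0, y)) = fst (f (x0, y'))" using f1[OF x0 m(2) m(4)] .
    ultimately have "f (x0, y) = f (x0, y')" by (simp add: prod_eq_iff)
    then have b: "E x0 y x0 y'" using feq[of "(x0, y)" "(x0, y')"] m x0 by (simp add: Et_mem)
    show ?thesis using a b by blast
  qed
  show ?thesis using x0 y0 key by blast
qed

end

lemma rinvD: "rinv G A R \<Longrightarrow> g \<in> carrier G \<Longrightarrow> (x, y) \<in> R \<Longrightarrow> (snd A g x, snd A g y) \<in> R"
  unfolding rinv_def by blast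

context mainL begin

lemma main_result:
  "\<exists>(X' :: (nat \<times> 'g set, 'g) gset) (Y' :: (nat \<times> 'h set, 'h) gset).
     gset_quotient G TG X X' \<and> gset_quotient H TH Y Y' \<and> gset_iso K Z (diag_prod (PhiO X') (PsiO Y'))"
proof -
  obtain x0 y0 and R :: "((nat \<times> 'g set) \<times> (nat \<times> 'g set)) set" and S :: "((nat \<times> 'h set) \<times> (nat \<times> 'h set)) set"
    where x0: "x0 \<in> fst X" and y0: "y0 \<in> fst Y" and R: "R = {(x, x'). E x y0 x' y0}"
      and S: "S = {(y, y'). E x0 y x0 y'}"
      and key: "\<And>x y x' y'. E x y x' y' \<Longrightarrow> E x y0 x' y0 \<and> E x0 y x0 y'"
    using E_proj by blast
  have one: "\<one>\<^bsub>G\<^esub> \<in> carrier G" using grpG by (simp add: group.is_monoid monoid.one_closed)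
  have oneH: "\<one>\<^bsub>H\<^esub> \<in> carrier H" using grpH by (simp add: group.is_monoid monoid.one_closed)
  have RS: "E x y x' y' \<longleftrightarrow> (x, x') \<in> R \<and> (y, y') \<in> S" for x y x' y'
  proof
    assume "E x y x' y'" then show "(x, x') \<in> R \<and> (y, y') \<in> S" using key R S by blast
  next
    assume a: "(x, x') \<in> R \<and> (y, y') \<in> S"
    then have e1: "E x y0 x' y0" and e2: "E x0 y x0 y'" using R S by auto
    have m: "x \<in> fst X" "x' \<in> fst X" "y \<in> fst Y" "y' \<in> fst Y" using E_mem[OF e1] E_mem[OF e2] by auto
    obtain h where h: "h \<in> carrier H" "snd Y h y0 = y" using Yt y0 m unfolding transitive_gset_def by blast
    obtain g where g: "g \<in> carrier G" "snd X g x0 = x'" using Xt x0 m unfolding transitive_gset_def by blast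
    have "E (snd X \<one>\<^bsub>G\<^esub> x) (snd Y h y0) (snd X \<one>\<^bsub>G\<^esub> x') (snd Y h y0)" by (rule E_inv[OF e1 one h(1)])
    then have e3: "E x y x' y" using h(2) pre_one[OF is_gset_pre[OF Xg]] m by simp
    have "E (snd X g x0) (snd Y \<one>\<^bsub>H\<^esub> y) (snd X g x0) (snd Y \<one>\<^bsub>H\<^esub> y')" by (rule E_inv[OF e2 g(1) oneH])
    then have e4: "E x' y x' y'" using g(2) pre_one[OF is_gset_pre[OF Yg]] m by simp
    show "E x y x' y'" by (rule E_trans[OF e3 e4])
  qed
  have Req: "equiv (fst X) R"
  proof (rule equivI)
    show "R \<subseteq> fst X \<times> fst X"
    proof (rule subsetI)
      fix p assume "p \<in> R"
      then obtain x x' where p: "p = (x, x')" "E x y0 x' y0" unfolding R by blast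
      then show "p \<in> fst X \<times> fst X" using E_mem[OF p(2)] by simp
    qed
    show "refl_on (fst X) R"
    proof (rule refl_onI)
      fix x assume "x \<in> fst X" then show "(x, x) \<in> R" unfolding R using E_refl[OF _ y0] by simp
    qed
    show "sym R"
    proof (rule symI)
      fix x x' assume "(x, x') \<in> R" then show "(x', x) \<in> R" unfolding R using E_sym by simp
    qed
    show "trans R"
    proof (rule transI)
      fix x x' x'' assume "(x, x') \<in> R" "(x', x'') \<in> R" then show "(x, x'') \<in> R" unfolding R using E_trans by simp
    qed
  qed
  have Seq: "equiv (fst Y) S"
  proof (rule equivI)
    show "S \<subseteq> fst Y \<times> fst Y"
    proof (rule subsetI)
      fix p assume "p \<in> S"
      then obtain y y' where p: "p = (y, y')" "E x0 y x0 y'" unfolding S by blast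
      then show "p \<in> fst Y \<times> fst Y" using E_mem[OF p(2)] by simp
    qed
    show "refl_on (fst Y) S"
    proof (rule refl_onI)
      fix y assume "y \<in> fst Y" then show "(y, y) \<in> S" unfolding S using E_refl[OF x0] by simp
    qed
    show "sym S"
    proof (rule symI)
      fix y y' assume "(y, y') \<in> S" then show "(y', y) \<in> S" unfolding S using E_sym by simp
    qed
    show "trans S"
    proof (rule transI)
      fix y y' y'' assume "(y, y') \<in> S" "(y', y'') \<in> S" then show "(y, y'') \<in> S" unfolding S using E_trans by simp
    qed
  qed
  have Rri: "rinv G X R" unfolding rinv_def
  proof (intro ballI allI impI)
    fix g x x' assume g: "g \<in> carrier G" and xx: "(x, x') \<in> R"
    then have "E (snd X g x) (snd Y \<one>\<^bsub>H\<^esub> y0) (snd X g x') (snd Y \<one>\<^bsub>H\<^esub> y0)"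
      using E_inv[OF _ g oneH] R by simp
    then show "(snd X g x, snd X g x') \<in> R" using pre_one[OF is_gset_pre[OF Yg] y0] R by simp
  qed
  have Sri: "rinv H Y S" unfolding rinv_def
  proof (intro ballI allI impI)
    fix h y y' assume h: "h \<in> carrier H" and yy: "(y, y') \<in> S"
    then have "E (snd X \<one>\<^bsub>G\<^esub> x0) (snd Y h y) (snd X \<one>\<^bsub>G\<^esub> x0) (snd Y h y')"
      using E_inv[OF _ one h] S by simp
    then show "(snd Y h y, snd Y h y') \<in> S" using pre_one[OF is_gset_pre[OF Xg] x0] S by simp
  qed
  define X' where "X' = canon G (quo X R)"
  define Y' where "Y' = canon H (quo Y S)"
  define pX where "pX x = cenc G (quo X R) (R `` {x})" for x
  define pY where "pY y = cenc H (quo Y S) (S `` {y})" for y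
  note QX = quotient_package[OF proG Xg Xt Req Rri, folded X'_def pX_def]
  note QY = quotient_package[OF proH Yg Yt Seq Sri, folded Y'_def pY_def]
  have qX: "gset_quotient G TG X X'" unfolding gset_quotient_def using QX(1,3,4) by blast
  have qY: "gset_quotient H TH Y Y'" unfolding gset_quotient_def using QY(1,3,4) by blast
  have Rsub: "R \<subseteq> fst X \<times> fst X" using Req unfolding equiv_def by blast
  have Ssub: "S \<subseteq> fst Y \<times> fst Y" using Seq unfolding equiv_def by blast
  have Rk: "{p \<in> fst X \<times> fst X. pX (fst p) = pX (snd p)} = R"
    using QX(5) Rsub by auto
  have Sk: "{p \<in> fst Y \<times> fst Y. pY (fst p) = pY (snd p)} = S"
    using QY(5) Ssub by auto
  have hR: "A.hat R = {a \<in> fst (PhiO X) \<times> fst (PhiO X). PhiM X X' pX (fst a) = PhiM X X' pX (snd a)}"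
    using A.hat_kernel[OF QX(1) QX(3)] Rk by simp
  have hS: "B.hat S = {b \<in> fst (PsiO Y) \<times> fst (PsiO Y). PsiM Y Y' pY (fst b) = PsiM Y Y' pY (snd b)}"
    using B.hat_kernel[OF QY(1) QY(3)] Sk by simp
  have iR: "A.invs R" unfolding A.invs_def
  proof (intro conjI ballI)
    show "R \<subseteq> fst X \<times> fst X" by (rule Rsub)
  next
    fix g p assume g: "g \<in> carrier G" and p: "p \<in> R"
    obtain x x' where xx: "p = (x, x')" by (cases p)
    have xR: "(x, x') \<in> R" using p xx by simp
    have "(snd X g x, snd X g x') \<in> R" by (rule rinvD[OF Rri g xR])
    then show "snd A.P0 g p \<in> R" using xx by (simp add: A.P0_act)
  qed
  have iS: "B.invs S" unfolding B.invs_def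
  proof (intro conjI ballI)
    show "S \<subseteq> fst Y \<times> fst Y" by (rule Ssub)
  next
    fix h p assume h: "h \<in> carrier H" and p: "p \<in> S"
    obtain y y' where yy: "p = (y, y')" by (cases p)
    have yS: "(y, y') \<in> S" using p yy by simp
    have "(snd Y h y, snd Y h y') \<in> S" by (rule rinvD[OF Sri h yS])
    then show "snd B.P0 h p \<in> S" using yy by (simp add: B.P0_act)
  qed
  define theta where "theta w = (PhiM X X' pX (fst w), PsiM Y Y' pY (snd w))" for w
  have orbR: "(x, x') \<in> R" if x: "x \<in> fst X" "x' \<in> fst X" and aa: "(a, a') \<in> A.hat (A.orb (x, x'))"
    and aR: "(a, a') \<in> A.hat R" for x x' a a'
  proof (rule ccontr)
    assume nR: "(x, x') \<notin> R"
    have p: "(x, x') \<in> fst X \<times> fst X" using x by simp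
    have "A.orb (x, x') \<inter> R = {}"
    proof (rule ccontr)
      assume "A.orb (x, x') \<inter> R \<noteq> {}"
      then obtain r where r: "r \<in> A.orb (x, x')" "r \<in> R" by blast
      have "A.orb r = A.orb (x, x')" by (rule A.orb_eq[OF p r(1)])
      moreover have "A.orb r \<subseteq> R" by (rule A.orb_in[OF iR r(2)])
      ultimately show False using A.orb_self[OF p] nR by blast
    qed
    then have "A.hat (A.orb (x, x')) \<inter> A.hat R = {}" by (rule A.hat_union(2)[OF A.orb_invs[OF p] iR])
    then show False using aa aR by blast
  qed
  have orbS: "(y, y') \<in> S" if y: "y \<in> fst Y" "y' \<in> fst Y" and bb: "(b, b') \<in> B.hat (B.orb (y, y'))"
    and bS: "(b, b') \<in> B.hat S" for y y' b b'
  proof (rule ccontr)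
    assume nS: "(y, y') \<notin> S"
    have p: "(y, y') \<in> fst Y \<times> fst Y" using y by simp
    have "B.orb (y, y') \<inter> S = {}"
    proof (rule ccontr)
      assume "B.orb (y, y') \<inter> S \<noteq> {}"
      then obtain r where r: "r \<in> B.orb (y, y')" "r \<in> S" by blast
      have "B.orb r = B.orb (y, y')" by (rule B.orb_eq[OF p r(1)])
      moreover have "B.orb r \<subseteq> S" by (rule B.orb_in[OF iS r(2)])
      ultimately show False using B.orb_self[OF p] nS by blast
    qed
    then have "B.hat (B.orb (y, y')) \<inter> B.hat S = {}" by (rule B.hat_union(2)[OF B.orb_invs[OF p] iS])
    then show False using bb bS by blast
  qed
  have kerq: "q w = q w' \<longleftrightarrow> theta w = theta w'" if w: "w \<in> fst W" and w': "w' \<in> fst W" for w w'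
  proof -
    obtain a b where ab: "w = (a, b)" "a \<in> fst (PhiO X)" "b \<in> fst (PsiO Y)" using w by (auto simp: diag_fst)
    obtain a' b' where ab': "w' = (a', b')" "a' \<in> fst (PhiO X)" "b' \<in> fst (PsiO Y)" using w' by (auto simp: diag_fst)
    obtain px where px: "px \<in> fst X \<times> fst X" "(a, a') \<in> A.hat (A.orb px)"
      using A.hat_orbit_exists[of "(a, a')"] ab ab' by auto
    obtain x x' where xx: "px = (x, x')" "x \<in> fst X" "x' \<in> fst X" using px(1) by auto
    obtain py where py: "py \<in> fst Y \<times> fst Y" "(b, b') \<in> B.hat (B.orb py)"
      using B.hat_orbit_exists[of "(b, b')"] ab ab' by auto
    obtain y y' where yy: "py = (y, y')" "y \<in> fst Y" "y' \<in> fst Y" using py(1) by auto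
    have aO: "(a, a') \<in> A.hat (A.orb (x, x'))" using px xx by simp
    have bO: "(b, b') \<in> B.hat (B.orb (y, y'))" using py yy by simp
    show ?thesis
    proof
      assume "q w = q w'"
      then have "E x y x' y'" unfolding E_def using xx yy aO bO ab ab' by blast
      then have rs: "(x, x') \<in> R" "(y, y') \<in> S" using RS by blast+
      have "(a, a') \<in> A.hat R"
        using A.hat_mono[OF A.orb_invs[OF px(1)] iR A.orb_in[OF iR]] rs(1) aO xx by blast
      moreover have "(b, b') \<in> B.hat S"
        using B.hat_mono[OF B.orb_invs[OF py(1)] iS B.orb_in[OF iS]] rs(2) bO yy by blast
      ultimately show "theta w = theta w'" unfolding theta_def hR hS using ab ab' by simp
    next
      assume "theta w = theta w'"
      then have "(a, a') \<in> A.hat R" and "(b, b') \<in> B.hat S"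
        unfolding theta_def hR hS using ab ab' by simp_all
      then have "(x, x') \<in> R" "(y, y') \<in> S" using orbR[OF xx(2,3) aO] orbS[OF yy(2,3) bO] by blast+
      then have "E x y x' y'" using RS by blast
      then show "q w = q w'" using E_all[OF _ aO bO] ab ab' by simp
    qed
  qed
  define T where "T = diag_prod (PhiO X') (PsiO Y')"
  have gPX: "gmap K (PhiO X) (PhiO X') (PhiM X X' pX)" by (rule A.F_gmap[OF Xg QX(1) QX(3)])
  have gPY: "gmap K (PsiO Y) (PsiO Y') (PsiM Y Y' pY)" by (rule B.F_gmap[OF Yg QY(1) QY(3)])
  have gth: "gmap K W T theta"
    unfolding gmap_def T_def theta_def using gPX gPY unfolding gmap_def by (auto simp: diag_fst diag_act)
  have Tt: "transitive_gset K T" unfolding T_def by (rule hyp[OF QX(1) QX(2) QY(1) QY(2)])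
  have thsurj: "theta ` fst W = fst T"
  proof
    show "theta ` fst W \<subseteq> fst T"
    proof (rule image_subsetI)
      fix w assume "w \<in> fst W" then show "theta w \<in> fst T" using gth unfolding gmap_def by simp
    qed
  next
    show "fst T \<subseteq> theta ` fst W"
    proof
      fix t assume t: "t \<in> fst T"
      obtain w0 where w0: "w0 \<in> fst W" using nonemptyX nonemptyY by (auto simp: diag_fst)
      have tw0: "theta w0 \<in> fst T" using gth w0 unfolding gmap_def by blast
      obtain k where k: "k \<in> carrier K" "snd T k (theta w0) = t" using Tt tw0 t unfolding transitive_gset_def by blast
      have "theta (snd W k w0) = t" using gth k w0 unfolding gmap_def by simp
      moreover have "snd W k w0 \<in> fst W"
      proof -
        obtain a b where ab: "w0 = (a, b)" "a \<in> fst (PhiO X)" "b \<in> fst (PsiO Y)" using w0 by (auto simp: diag_fst)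
        have "snd (PhiO X) k a \<in> fst (PhiO X)" by (rule pre_closed[OF is_gset_pre[OF A.F_gset[OF Xg]] k(1) ab(2)])
        moreover have "snd (PsiO Y) k b \<in> fst (PsiO Y)" by (rule pre_closed[OF is_gset_pre[OF B.F_gset[OF Yg]] k(1) ab(3)])
        ultimately show ?thesis using ab(1) by (simp add: diag_fst diag_act)
      qed
      ultimately show "t \<in> theta ` fst W" by (metis image_eqI)
    qed
  qed
  have Wcl: "snd W k w \<in> fst W" if k: "k \<in> carrier K" and w: "w \<in> fst W" for k w
  proof -
    obtain a b where ab: "w = (a, b)" "a \<in> fst (PhiO X)" "b \<in> fst (PsiO Y)" using w by (auto simp: diag_fst)
    have "snd (PhiO X) k a \<in> fst (PhiO X)" by (rule pre_closed[OF is_gset_pre[OF A.F_gset[OF Xg]] k ab(2)])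
    moreover have "snd (PsiO Y) k b \<in> fst (PsiO Y)" by (rule pre_closed[OF is_gset_pre[OF B.F_gset[OF Yg]] k ab(3)])
    ultimately show ?thesis using ab(1) by (simp add: diag_fst diag_act)
  qed
  define sw where "sw z = (SOME w. w \<in> fst W \<and> q w = z)" for z
  have sw: "sw z \<in> fst W \<and> q (sw z) = z" if z: "z \<in> fst Z" for z
  proof -
    have "z \<in> q ` fst W" using qs z by simp
    then obtain w where "z = q w" "w \<in> fst W" by (rule imageE)
    then have "\<exists>w. w \<in> fst W \<and> q w = z" by (intro exI[of _ w]) simp
    then show ?thesis unfolding sw_def by (rule someI_ex)
  qed
  define psi where "psi z = theta (sw z)" for z
  have gpsi: "gmap K Z T psi"
    unfolding gmap_def
  proof (intro conjI ballI)
    fix z assume "z \<in> fst Z"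
    then have "sw z \<in> fst W" using sw by simp
    then show "psi z \<in> fst T" unfolding psi_def using gth unfolding gmap_def by simp
  next
    fix k z assume k: "k \<in> carrier K" and z: "z \<in> fst Z"
    have s1: "sw z \<in> fst W" "q (sw z) = z" using sw[OF z] by auto
    have kz: "snd Z k z \<in> fst Z" by (rule pre_closed[OF is_gset_pre[OF Zg] k z])
    have s2: "sw (snd Z k z) \<in> fst W" "q (sw (snd Z k z)) = snd Z k z" using sw[OF kz] by auto
    have "q (snd W k (sw z)) = snd Z k (q (sw z))" using qg k s1(1) unfolding gmap_def by blast
    then have "q (sw (snd Z k z)) = q (snd W k (sw z))" using s1(2) s2(2) by simp
    then have "theta (sw (snd Z k z)) = theta (snd W k (sw z))" using kerq[OF s2(1) Wcl[OF k s1(1)]] by simp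
    also have "\<dots> = snd T k (theta (sw z))" using gth k s1(1) unfolding gmap_def by blast
    finally show "psi (snd Z k z) = snd T k (psi z)" unfolding psi_def .
  qed
  have bpsi: "bij_betw psi (fst Z) (fst T)"
    unfolding bij_betw_def
  proof
    show "inj_on psi (fst Z)"
    proof (rule inj_onI)
      fix z z' assume z: "z \<in> fst Z" and z': "z' \<in> fst Z" and eq: "psi z = psi z'"
      have "q (sw z) = q (sw z')" using kerq[of "sw z" "sw z'"] sw[OF z] sw[OF z'] eq unfolding psi_def by simp
      then show "z = z'" using sw[OF z] sw[OF z'] by simp
    qed
  next
    show "psi ` fst Z = fst T"
    proof
      show "psi ` fst Z \<subseteq> fst T"
      proof (rule image_subsetI)
        fix z assume "z \<in> fst Z" then show "psi z \<in> fst T" using gpsi unfolding gmap_def by simp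
      qed
    next
      show "fst T \<subseteq> psi ` fst Z"
      proof
        fix t assume "t \<in> fst T"
        then have "t \<in> theta ` fst W" using thsurj by simp
        then obtain w where w0: "t = theta w" "w \<in> fst W" by (rule imageE)
        then have w: "w \<in> fst W" "theta w = t" by simp_all
        have "q w \<in> q ` fst W" using w(1) by (rule imageI)
        then have qz: "q w \<in> fst Z" using qs by simp
        have "q (sw (q w)) = q w" using sw[OF qz] by simp
        then have "theta (sw (q w)) = theta w" using kerq[of "sw (q w)" w] sw[OF qz] w(1) by simp
        then have "psi (q w) = t" unfolding psi_def using w(2) by simp
        then show "t \<in> psi ` fst Z" using qz by (metis image_eqI)
      qed
    qed
  qed
  have "gset_iso K Z (diag_prod (PhiO X') (PsiO Y'))" unfolding gset_iso_def T_def[symmetric] using gpsi bpsi by blast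
  then show ?thesis using qX qY by blast
qed

end

theorem proposition5p7:
  fixes G :: "'g monoid" and TG :: "'g topology"
    and H :: "'h monoid" and TH :: "'h topology"
    and K :: "'k monoid" and TK :: "'k topology"
    and PhiO :: "(nat \<times> 'g set, 'g) gset \<Rightarrow> (nat \<times> 'k set, 'k) gset"
    and PhiM :: "(nat \<times> 'g set, 'g) gset \<Rightarrow> (nat \<times> 'g set, 'g) gset
                  \<Rightarrow> (nat \<times> 'g set \<Rightarrow> nat \<times> 'g set) \<Rightarrow> (nat \<times> 'k set \<Rightarrow> nat \<times> 'k set)"
    and PsiO :: "(nat \<times> 'h set, 'h) gset \<Rightarrow> (nat \<times> 'k set, 'k) gset"
    and PsiM :: "(nat \<times> 'h set, 'h) gset \<Rightarrow> (nat \<times> 'h set, 'h) gset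
                  \<Rightarrow> (nat \<times> 'h set \<Rightarrow> nat \<times> 'h set) \<Rightarrow> (nat \<times> 'k set \<Rightarrow> nat \<times> 'k set)"
    and X :: "(nat \<times> 'g set, 'g) gset"
    and Y :: "(nat \<times> 'h set, 'h) gset"
    and Z :: "('z, 'k) gset"
  assumes "pro_oligomorphic G TG" and "pro_oligomorphic H TH" and "pro_oligomorphic K TK"
    and "split_wrt G TG TYPE('h)" and "split_wrt G TG TYPE('k)"
    and "exact_functor G TG K TK PhiO PhiM"
    and "exact_functor H TH K TK PsiO PsiM"
    and "\<forall>X' Y'. is_gset G TG X' \<and> transitive_gset G X' \<and> is_gset H TH Y' \<and> transitive_gset H Y'
            \<longrightarrow> transitive_gset K (diag_prod (PhiO X') (PsiO Y'))"
    and "is_gset G TG X" and "transitive_gset G X"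
    and "is_gset H TH Y" and "transitive_gset H Y"
    and "gset_quotient K TK (diag_prod (PhiO X) (PsiO Y)) Z"
  shows "\<exists>X' Y'. gset_quotient G TG X X' \<and> gset_quotient H TH Y Y' \<and>
           gset_iso K Z (diag_prod (PhiO X') (PsiO Y'))"
proof -
  obtain q where Zg: "is_gset K TK Z" and qg: "gmap K (diag_prod (PhiO X) (PsiO Y)) Z q"
    and qs: "q ` fst (diag_prod (PhiO X) (PsiO Y)) = fst Z"
    using assms(13) unfolding gset_quotient_def by blast
  have hyp: "\<And>X' Y'. is_gset G TG X' \<Longrightarrow> transitive_gset G X' \<Longrightarrow> is_gset H TH Y' \<Longrightarrow> transitive_gset H Y'
            \<Longrightarrow> transitive_gset K (diag_prod (PhiO X') (PsiO Y'))"
    using assms(8) by blast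
  have M: "mainL G TG H TH K TK PhiO PhiM PsiO PsiM X Y Z q"
    by (rule mainL.intro[OF assms(1) assms(2) assms(3) assms(4) assms(6) assms(7) hyp
          assms(9) assms(10) assms(11) assms(12) Zg qg qs])
  show ?thesis by (rule mainL.main_result[OF M])
qed

end
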